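(* Let $\varepsilon\le 1$. Then \[ S^*_{m,\alpha,\varepsilon,0}=\Omega\left(\frac{k}{m\alpha^2}+\frac{k}{\sqrt{m}\,\alpha\varepsilon}\right). \]
   Context: Let $[k]=\{1,\dots,k\}$ and let $\Delta_k$ be the set of probability distributions on $[k]$. There are $s$ users; each user $u$ holds $m$ samples, and all $sm$ samples are i.i.d. from an unknown $p\in\Delta_k$. An algorithm $A$ maps the users' data to an estimate $\hat p^A\in\Delta_k$, possibly randomized. Two datasets are adjacent if they differ only in the data of a single user. $A$ is $(\varepsilon,\delta)$-differentially private if for all adjacent datasets $D,D'$ and all measurable sets $S$ of outputs, $\Pr[A(D)\in S]\le e^{\varepsilon}\Pr[A(D')\in S]+\delta$. Let $L(A,s,m,p)=\mathbb{E}\left[\sum_{i=1}^k|p_i-\hat p^A_i|\right]$. The user complexity of $A$ is $S^A_{m,\alpha,\varepsilon,\delta}=\min\{s:\sup_{p\in\Delta_k}L(A,s,m,p)\le\alpha\}$, and $S^*_{m,\alpha,\varepsilon,\delta}=\min_A S^A_{m,\alpha,\varepsilon,\delta}$, the minimum over all $(\varepsilon,\delta)$-differentially private algorithms $A$. The constant in $\Omega$ is universal. *)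

theory Defs
  imports "HOL-Analysis.Analysis" "HOL-Probability.Probability"
begin

text \<open>Alphabet [k] is rendered as {..<k}; users as {..<s}; each user's samples as {..<m}.
  A dataset assigns to each (user, sample index) pair a symbol.\<close>

definition datasets :: "nat \<Rightarrow> nat \<Rightarrow> nat \<Rightarrow> (nat \<times> nat \<Rightarrow> nat) set" where
  "datasets k s m = ({..<s} \<times> {..<m}) \<rightarrow>\<^sub>E {..<k}"

definition adjacent :: "nat \<Rightarrow> (nat \<times> nat \<Rightarrow> nat) \<Rightarrow> (nat \<times> nat \<Rightarrow> nat) \<Rightarrow> bool" where
  "adjacent s D D' = (\<exists>u<s. \<forall>i j. i \<noteq> u \<longrightarrow> D (i, j) = D' (i, j))"

definition dists :: "nat \<Rightarrow> nat pmf set" where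
  "dists k = {p. set_pmf p \<subseteq> {..<k}}"

definition est_simplex :: "nat \<Rightarrow> (nat \<Rightarrow> real) set" where
  "est_simplex k = {q. q \<in> {..<k} \<rightarrow>\<^sub>E UNIV \<and> (\<forall>i<k. 0 \<le> q i) \<and> (\<Sum>i<k. q i) = 1}"

definition out_space :: "nat \<Rightarrow> (nat \<Rightarrow> real) measure" where
  "out_space k = PiM {..<k} (\<lambda>_. (borel :: real measure))"

text \<open>An algorithm is a family (indexed by the number of users s) of randomized maps
  from datasets to (distributions of) estimates in the simplex.\<close>
definition valid_alg :: "nat \<Rightarrow> nat \<Rightarrow> (nat \<Rightarrow> (nat \<times> nat \<Rightarrow> nat) \<Rightarrow> (nat \<Rightarrow> real) measure) \<Rightarrow> bool" where
  "valid_alg k m A = (\<forall>s. \<forall>D\<in>datasets k s m.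
      prob_space (A s D) \<and> sets (A s D) = sets (out_space k) \<and> (AE q in A s D. q \<in> est_simplex k))"

definition diff_private :: "nat \<Rightarrow> nat \<Rightarrow> real \<Rightarrow> real \<Rightarrow>
    (nat \<Rightarrow> (nat \<times> nat \<Rightarrow> nat) \<Rightarrow> (nat \<Rightarrow> real) measure) \<Rightarrow> bool" where
  "diff_private k m \<epsilon> \<delta> A = (\<forall>s. \<forall>D\<in>datasets k s m. \<forall>D'\<in>datasets k s m. adjacent s D D' \<longrightarrow>
      (\<forall>S\<in>sets (out_space k). measure (A s D) S \<le> exp \<epsilon> * measure (A s D') S + \<delta>))"

definition data_pmf :: "nat pmf \<Rightarrow> nat \<Rightarrow> nat \<Rightarrow> (nat \<times> nat \<Rightarrow> nat) pmf" where
  "data_pmf p s m = Pi_pmf ({..<s} \<times> {..<m}) undefined (\<lambda>_. p)"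

definition loss :: "nat \<Rightarrow> (nat \<Rightarrow> (nat \<times> nat \<Rightarrow> nat) \<Rightarrow> (nat \<Rightarrow> real) measure) \<Rightarrow> nat \<Rightarrow> nat \<Rightarrow> nat pmf \<Rightarrow> ennreal" where
  "loss k A s m p = (\<integral>\<^sup>+ D. (\<integral>\<^sup>+ q. ennreal (\<Sum>i<k. \<bar>pmf p i - q i\<bar>) \<partial>(A s D)) \<partial>(measure_pmf (data_pmf p s m)))"

definition user_complexity :: "nat \<Rightarrow> nat \<Rightarrow> real \<Rightarrow>
    (nat \<Rightarrow> (nat \<times> nat \<Rightarrow> nat) \<Rightarrow> (nat \<Rightarrow> real) measure) \<Rightarrow> enat" where
  "user_complexity k m \<alpha> A = Inf (enat ` {s. (SUP p\<in>dists k. loss k A s m p) \<le> ennreal \<alpha>})"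

definition opt_user_complexity :: "nat \<Rightarrow> nat \<Rightarrow> real \<Rightarrow> real \<Rightarrow> real \<Rightarrow> enat" where
  "opt_user_complexity k m \<alpha> \<epsilon> \<delta> =
     (INF A\<in>{A. valid_alg k m A \<and> diff_private k m \<epsilon> \<delta> A}. user_complexity k m \<alpha> A)"

end

theory Submission
  imports Defs
begin

lemma sum_PiE_split:
  fixes F :: "('a \<Rightarrow> 'b) \<Rightarrow> 'c::comm_monoid_add"
  assumes fin: "finite I" "finite Y" and B: "B \<subseteq> I"
  shows "(\<Sum>D\<in>PiE I (\<lambda>_. Y). F D) =
    (\<Sum>x\<in>PiE B (\<lambda>_. Y). \<Sum>R\<in>PiE (I-B) (\<lambda>_. Y). F (\<lambda>z. if z\<in>B then x z else R z))"
proof -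
  have bij: "bij_betw (\<lambda>(x,R). (\<lambda>z. if z\<in>B then x z else R z)) (PiE B (\<lambda>_. Y) \<times> PiE (I-B) (\<lambda>_. Y)) (PiE I (\<lambda>_. Y))"
  proof (rule bij_betw_byWitness[where f'="\<lambda>D. (restrict D B, restrict D (I-B))"])
    show "\<forall>a\<in>PiE B (\<lambda>_. Y) \<times> PiE (I-B) (\<lambda>_. Y). (\<lambda>D. (restrict D B, restrict D (I-B))) ((\<lambda>(x,R). (\<lambda>z. if z\<in>B then x z else R z)) a) = a"
      by (auto simp: restrict_def fun_eq_iff PiE_def extensional_def)
    show "\<forall>a'\<in>PiE I (\<lambda>_. Y). (\<lambda>(x,R). (\<lambda>z. if z\<in>B then x z else R z)) ((\<lambda>D. (restrict D B, restrict D (I-B))) a') = a'"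
      using B by (auto simp: restrict_def fun_eq_iff PiE_def extensional_def)
    show "(\<lambda>(x,R). (\<lambda>z. if z\<in>B then x z else R z)) ` (PiE B (\<lambda>_. Y) \<times> PiE (I-B) (\<lambda>_. Y)) \<subseteq> PiE I (\<lambda>_. Y)"
      using B by (auto simp: PiE_def extensional_def Pi_def)
    show "(\<lambda>D. (restrict D B, restrict D (I-B))) ` PiE I (\<lambda>_. Y) \<subseteq> PiE B (\<lambda>_. Y) \<times> PiE (I-B) (\<lambda>_. Y)"
      using B by auto
  qed
  have "(\<Sum>D\<in>PiE I (\<lambda>_. Y). F D) = (\<Sum>p\<in>PiE B (\<lambda>_. Y) \<times> PiE (I-B) (\<lambda>_. Y). F ((\<lambda>(x,R). (\<lambda>z. if z\<in>B then x z else R z)) p))"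
    using sum.reindex_bij_betw[OF bij, of F] by simp
  also have "\<dots> = (\<Sum>x\<in>PiE B (\<lambda>_. Y). \<Sum>R\<in>PiE (I-B) (\<lambda>_. Y). F (\<lambda>z. if z\<in>B then x z else R z))"
    by (subst sum.cartesian_product) (auto intro!: sum.cong)
  finally show ?thesis .
qed

lemma sum_prod_PiE_pow:
  fixes g :: "'b \<Rightarrow> 'c::comm_semiring_1"
  assumes "finite I" "finite Y"
  shows "(\<Sum>D\<in>PiE I (\<lambda>_. Y). \<Prod>z\<in>I. g (D z)) = (sum g Y) ^ card I"
  using prod_sum_PiE[of I "\<lambda>_. Y" "\<lambda>_ y. g y"] assms by simp

lemma tv_chi2:
  fixes a b :: "'b \<Rightarrow> real"
  assumes fin: "finite I" "finite Y"
    and nn: "\<And>y. y\<in>Y \<Longrightarrow> 0 \<le> a y" "\<And>y. y\<in>Y \<Longrightarrow> 0 \<le> b y"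
    and z: "\<And>y. y\<in>Y \<Longrightarrow> b y = 0 \<Longrightarrow> a y = 0"
    and sa: "sum a Y = 1" and sb: "sum b Y = 1"
  shows "(\<Sum>D\<in>PiE I (\<lambda>_. Y). \<bar>(\<Prod>z\<in>I. a (D z)) - (\<Prod>z\<in>I. b (D z))\<bar>)
          \<le> sqrt ((\<Sum>y\<in>Y. (a y)\<^sup>2 / b y) ^ card I - 1)"
proof -
  define P where "P = PiE I (\<lambda>_. Y)"
  define A where "A D = (\<Prod>z\<in>I. a (D z))" for D
  define Bf where "Bf D = (\<Prod>z\<in>I. b (D z))" for D
  have finP: "finite P" unfolding P_def using fin by (simp add: finite_PiE)
  have An: "0 \<le> A D" and Bn: "0 \<le> Bf D" and AB: "Bf D = 0 \<Longrightarrow> A D = 0" if "D \<in> P" for D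
  proof -
    have DY: "\<And>z. z \<in> I \<Longrightarrow> D z \<in> Y" using that unfolding P_def by auto
    show "0 \<le> A D" unfolding A_def using DY nn by (auto intro: prod_nonneg)
    show "0 \<le> Bf D" unfolding Bf_def using DY nn by (auto intro: prod_nonneg)
    show "Bf D = 0 \<Longrightarrow> A D = 0" unfolding A_def Bf_def using DY z fin by (auto simp: prod_zero_iff)
  qed
  have sA: "sum A P = 1" unfolding A_def P_def using sum_prod_PiE_pow[OF fin, of a] sa by simp
  have sB: "sum Bf P = 1" unfolding Bf_def P_def using sum_prod_PiE_pow[OF fin, of b] sb by simp
  have sC: "(\<Sum>D\<in>P. (A D)\<^sup>2 / Bf D) = (\<Sum>y\<in>Y. (a y)\<^sup>2 / b y) ^ card I"
  proof -
    have "(\<Sum>D\<in>P. (A D)\<^sup>2 / Bf D) = (\<Sum>D\<in>P. \<Prod>z\<in>I. (a (D z))\<^sup>2 / b (D z))"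
      unfolding A_def Bf_def by (simp add: prod_dividef power_mult_distrib prod_power_distrib)
    also have "\<dots> = (\<Sum>y\<in>Y. (a y)\<^sup>2 / b y) ^ card I"
      unfolding P_def using sum_prod_PiE_pow[OF fin, of "\<lambda>y. (a y)\<^sup>2 / b y"] by simp
    finally show ?thesis .
  qed
  have eq1: "(\<Sum>D\<in>P. \<bar>A D - Bf D\<bar>) = (\<Sum>D\<in>P. (\<bar>A D - Bf D\<bar> / sqrt (Bf D)) * sqrt (Bf D))"
    by (rule sum.cong) (use AB in auto)
  have "(\<Sum>D\<in>P. \<bar>A D - Bf D\<bar>)\<^sup>2 \<le> (\<Sum>D\<in>P. (\<bar>A D - Bf D\<bar> / sqrt (Bf D))\<^sup>2) * (\<Sum>D\<in>P. (sqrt (Bf D))\<^sup>2)"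
    unfolding eq1 by (rule Cauchy_Schwarz_ineq_sum)
  also have "(\<Sum>D\<in>P. (sqrt (Bf D))\<^sup>2) = 1" using sB Bn by simp
  also have "(\<Sum>D\<in>P. (\<bar>A D - Bf D\<bar> / sqrt (Bf D))\<^sup>2) = (\<Sum>D\<in>P. (A D)\<^sup>2 / Bf D - 2 * A D + Bf D)"
  proof (rule sum.cong)
    fix D assume D: "D \<in> P"
    show "(\<bar>A D - Bf D\<bar> / sqrt (Bf D))\<^sup>2 = (A D)\<^sup>2 / Bf D - 2 * A D + Bf D"
    proof (cases "Bf D = 0")
      case True thus ?thesis using AB[OF D] by simp
    next
      case False
      hence "Bf D > 0" using Bn[OF D] by simp
      thus ?thesis by (simp add: power_divide field_simps power2_eq_square)
    qed
  qed simp
  also have "\<dots> = (\<Sum>y\<in>Y. (a y)\<^sup>2 / b y) ^ card I - 1"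
    using sA sB sC by (simp add: sum.distrib sum_subtractf sum_distrib_left[symmetric])
  finally have "(\<Sum>D\<in>P. \<bar>A D - Bf D\<bar>)\<^sup>2 \<le> (\<Sum>y\<in>Y. (a y)\<^sup>2 / b y) ^ card I - 1" by simp
  hence "sqrt ((\<Sum>D\<in>P. \<bar>A D - Bf D\<bar>)\<^sup>2) \<le> sqrt ((\<Sum>y\<in>Y. (a y)\<^sup>2 / b y) ^ card I - 1)"
    using real_sqrt_le_mono by blast
  moreover have "(\<Sum>D\<in>P. \<bar>A D - Bf D\<bar>) \<ge> 0" by (simp add: sum_nonneg)
  ultimately show ?thesis unfolding P_def A_def Bf_def by simp
qed

lemma dp_step:
  fixes \<alpha> \<beta> g :: "'x \<Rightarrow> real"
  assumes X: "finite X" "X \<noteq> {}"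
    and an: "\<And>x. x\<in>X \<Longrightarrow> 0 \<le> \<alpha> x" and bn: "\<And>x. x\<in>X \<Longrightarrow> 0 \<le> \<beta> x"
    and sa: "sum \<alpha> X = 1" and sb: "sum \<beta> X = 1"
    and gn: "\<And>x. x\<in>X \<Longrightarrow> 0 \<le> g x" and gc: "\<And>x y. x\<in>X \<Longrightarrow> y\<in>X \<Longrightarrow> g x \<le> c * g y"
    and c: "1 \<le> c"
  shows "(\<Sum>x\<in>X. \<alpha> x * g x) \<le> (1 + (c-1) * (\<Sum>x\<in>X. \<bar>\<alpha> x - \<beta> x\<bar>)) * (\<Sum>x\<in>X. \<beta> x * g x)"
proof -
  define mn where "mn = Min (g ` X)"
  obtain x0 where x0: "x0 \<in> X" "mn = g x0" unfolding mn_def using X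
    by (metis (mono_tags, lifting) Min_in empty_is_image finite_imageI imageE)
  have mle: "mn \<le> g x" if "x \<in> X" for x unfolding mn_def using X that by auto
  have m0: "0 \<le> mn" using gn x0 by simp
  have "mn = (\<Sum>x\<in>X. \<beta> x * mn)" using sb by (simp add: sum_distrib_right[symmetric])
  also have "\<dots> \<le> (\<Sum>x\<in>X. \<beta> x * g x)" by (intro sum_mono mult_left_mono) (auto simp: mle bn)
  finally have mS: "mn \<le> (\<Sum>x\<in>X. \<beta> x * g x)" .
  have "(\<Sum>x\<in>X. (\<alpha> x - \<beta> x) * (g x - mn)) = (\<Sum>x\<in>X. \<alpha> x * g x) - (\<Sum>x\<in>X. \<beta> x * g x) - mn * (sum \<alpha> X - sum \<beta> X)"
    by (simp add: algebra_simps sum_subtractf sum_distrib_left sum.distrib)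
  hence "(\<Sum>x\<in>X. \<alpha> x * g x) - (\<Sum>x\<in>X. \<beta> x * g x) = (\<Sum>x\<in>X. (\<alpha> x - \<beta> x) * (g x - mn))"
    using sa sb by simp
  also have "\<dots> \<le> (\<Sum>x\<in>X. \<bar>\<alpha> x - \<beta> x\<bar> * ((c-1) * mn))"
  proof (intro sum_mono)
    fix x assume x: "x \<in> X"
    have "0 \<le> g x - mn" using mle x by simp
    moreover have "g x - mn \<le> (c-1)*mn" using gc[OF x x0(1)] x0 by (simp add: algebra_simps)
    ultimately have "(\<alpha> x - \<beta> x) * (g x - mn) \<le> \<bar>\<alpha> x - \<beta> x\<bar> * (g x - mn)"
      by (metis abs_ge_self mult_right_mono)
    also have "\<dots> \<le> \<bar>\<alpha> x - \<beta> x\<bar> * ((c-1) * mn)" using \<open>g x - mn \<le> (c-1)*mn\<close> by (simp add: mult_left_mono)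
    finally show "(\<alpha> x - \<beta> x) * (g x - mn) \<le> \<bar>\<alpha> x - \<beta> x\<bar> * ((c-1) * mn)" .
  qed
  also have "\<dots> = (\<Sum>x\<in>X. \<bar>\<alpha> x - \<beta> x\<bar>) * ((c-1) * mn)" by (rule sum_distrib_right[symmetric])
  also have "\<dots> \<le> (\<Sum>x\<in>X. \<bar>\<alpha> x - \<beta> x\<bar>) * ((c-1) * (\<Sum>x\<in>X. \<beta> x * g x))"
    using mS c by (intro mult_left_mono) (auto simp: sum_nonneg)
  finally show ?thesis by (simp add: algebra_simps)
qed

lemma hybrid:
  fixes f :: "(nat\<times>nat \<Rightarrow> 'y) \<Rightarrow> real" and a b :: "'y \<Rightarrow> real"
  assumes Y: "finite Y" "Y \<noteq> {}"
    and an: "\<And>y. y\<in>Y \<Longrightarrow> 0 \<le> a y" and bn: "\<And>y. y\<in>Y \<Longrightarrow> 0 \<le> b y"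
    and sa: "sum a Y = 1" and sb: "sum b Y = 1" and c: "1 \<le> c"
    and fn: "\<And>D. D \<in> PiE ({..<s}\<times>{..<m}) (\<lambda>_. Y) \<Longrightarrow> 0 \<le> f D"
    and fdp: "\<And>D D' u. D \<in> PiE ({..<s}\<times>{..<m}) (\<lambda>_. Y) \<Longrightarrow> D' \<in> PiE ({..<s}\<times>{..<m}) (\<lambda>_. Y) \<Longrightarrow>
        u < s \<Longrightarrow> (\<forall>i j. i \<noteq> u \<longrightarrow> D (i,j) = D' (i,j)) \<Longrightarrow> f D \<le> c * f D'"
    and T: "\<And>u::nat. (\<Sum>x\<in>PiE ({u}\<times>{..<m}) (\<lambda>_. Y). \<bar>(\<Prod>z\<in>{u}\<times>{..<m}. a (x z)) - (\<Prod>z\<in>{u}\<times>{..<m}. b (x z))\<bar>) \<le> T"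
    and J: "J \<subseteq> {..<s}"
  shows "(\<Sum>D\<in>PiE ({..<s}\<times>{..<m}) (\<lambda>_. Y). (\<Prod>z\<in>{..<s}\<times>{..<m}. if fst z \<in> J then a (D z) else b (D z)) * f D)
     \<le> (1 + (c-1)*T)^card J * (\<Sum>D\<in>PiE ({..<s}\<times>{..<m}) (\<lambda>_. Y). (\<Prod>z\<in>{..<s}\<times>{..<m}. b (D z)) * f D)"
proof -
  define I where "I = {..<s}\<times>{..<m}"
  have finI: "finite I" unfolding I_def by simp
  define W where "W J D = (\<Prod>z\<in>I. if fst z \<in> J then a (D z) else b (D z))" for J D
  have T0: "0 \<le> T" using T[of 0] by (meson order.trans sum_nonneg abs_ge_zero)
  have "finite J" using J finite_subset by blast
  from this J have "(\<Sum>D\<in>PiE I (\<lambda>_. Y). W J D * f D) \<le> (1 + (c-1)*T)^card J * (\<Sum>D\<in>PiE I (\<lambda>_. Y). W {} D * f D)"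
  proof (induction J rule: finite_induct)
    case empty thus ?case by simp
  next
    case (insert u J)
    define B where "B = {u}\<times>{..<m}"
    have BI: "B \<subseteq> I" using insert.prems unfolding B_def I_def by auto
    define mg where "mg x R = (\<lambda>z. if z\<in>B then x z else R z)" for x R :: "nat\<times>nat \<Rightarrow> 'y"
    define wJ where "wJ (z::nat\<times>nat) y = (if fst z \<in> J then a y else b y)" for z y
    define \<rho> where "\<rho> R = (\<Prod>z\<in>I-B. wJ z (R z))" for R
    define \<alpha> where "\<alpha> x = (\<Prod>z\<in>B. a (x z))" for x
    define \<beta> where "\<beta> x = (\<Prod>z\<in>B. b (x z))" for x
    have finB: "finite B" unfolding B_def by simp
    have mgP: "mg x R \<in> PiE I (\<lambda>_. Y)" if "x \<in> PiE B (\<lambda>_. Y)" "R \<in> PiE (I-B) (\<lambda>_. Y)" for x R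
      using that BI unfolding mg_def by (auto simp: PiE_def extensional_def Pi_def)
    have W1: "W (insert u J) (mg x R) = \<alpha> x * \<rho> R" for x R
    proof -
      have "W (insert u J) (mg x R) = (\<Prod>z\<in>I-B. if fst z \<in> insert u J then a (mg x R z) else b (mg x R z)) *
            (\<Prod>z\<in>B. if fst z \<in> insert u J then a (mg x R z) else b (mg x R z))"
        unfolding W_def by (rule prod.subset_diff[OF BI finI])
      also have "(\<Prod>z\<in>I-B. if fst z \<in> insert u J then a (mg x R z) else b (mg x R z)) = \<rho> R"
        unfolding \<rho>_def wJ_def mg_def B_def I_def by (intro prod.cong) auto
      also have "(\<Prod>z\<in>B. if fst z \<in> insert u J then a (mg x R z) else b (mg x R z)) = \<alpha> x"
        unfolding \<alpha>_def mg_def B_def by (intro prod.cong) auto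
      finally show ?thesis by simp
    qed
    have W2: "W J (mg x R) = \<beta> x * \<rho> R" for x R
    proof -
      have "W J (mg x R) = (\<Prod>z\<in>I-B. if fst z \<in> J then a (mg x R z) else b (mg x R z)) *
            (\<Prod>z\<in>B. if fst z \<in> J then a (mg x R z) else b (mg x R z))"
        unfolding W_def by (rule prod.subset_diff[OF BI finI])
      also have "(\<Prod>z\<in>I-B. if fst z \<in> J then a (mg x R z) else b (mg x R z)) = \<rho> R"
        unfolding \<rho>_def wJ_def mg_def B_def I_def by (intro prod.cong) auto
      also have "(\<Prod>z\<in>B. if fst z \<in> J then a (mg x R z) else b (mg x R z)) = \<beta> x"
        unfolding \<beta>_def mg_def B_def using insert.hyps by (intro prod.cong) auto
      finally show ?thesis by simp
    qed
    have step: "(\<Sum>x\<in>PiE B (\<lambda>_. Y). \<alpha> x * f (mg x R)) \<le> (1 + (c-1)*T) * (\<Sum>x\<in>PiE B (\<lambda>_. Y). \<beta> x * f (mg x R))"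
      if R: "R \<in> PiE (I-B) (\<lambda>_. Y)" for R
    proof -
      have "(\<Sum>x\<in>PiE B (\<lambda>_. Y). \<alpha> x * f (mg x R)) \<le> (1 + (c-1) * (\<Sum>x\<in>PiE B (\<lambda>_. Y). \<bar>\<alpha> x - \<beta> x\<bar>)) * (\<Sum>x\<in>PiE B (\<lambda>_. Y). \<beta> x * f (mg x R))"
      proof (rule dp_step)
        show "finite (PiE B (\<lambda>_. Y))" using finB Y by (simp add: finite_PiE)
        show "PiE B (\<lambda>_. Y) \<noteq> {}" using Y by (simp add: PiE_eq_empty_iff)
        show "0 \<le> \<alpha> x" if "x \<in> PiE B (\<lambda>_. Y)" for x unfolding \<alpha>_def using that an by (auto intro!: prod_nonneg)
        show "0 \<le> \<beta> x" if "x \<in> PiE B (\<lambda>_. Y)" for x unfolding \<beta>_def using that bn by (auto intro!: prod_nonneg)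
        show "sum \<alpha> (PiE B (\<lambda>_. Y)) = 1" unfolding \<alpha>_def using sum_prod_PiE_pow[OF finB Y(1), of a] sa by simp
        show "sum \<beta> (PiE B (\<lambda>_. Y)) = 1" unfolding \<beta>_def using sum_prod_PiE_pow[OF finB Y(1), of b] sb by simp
        show "0 \<le> f (mg x R)" if "x \<in> PiE B (\<lambda>_. Y)" for x using fn mgP[OF that R] unfolding I_def by simp
        show "f (mg x R) \<le> c * f (mg y R)" if "x \<in> PiE B (\<lambda>_. Y)" "y \<in> PiE B (\<lambda>_. Y)" for x y
          using fdp[of "mg x R" "mg y R" u] mgP[OF that(1) R] mgP[OF that(2) R] insert.prems
          unfolding I_def mg_def B_def by auto
      qed (use c in auto)
      also have "\<dots> \<le> (1 + (c-1)*T) * (\<Sum>x\<in>PiE B (\<lambda>_. Y). \<beta> x * f (mg x R))"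
      proof (rule mult_right_mono)
        show "0 \<le> (\<Sum>x\<in>PiE B (\<lambda>_. Y). \<beta> x * f (mg x R))"
          using fn mgP[OF _ R] bn unfolding I_def \<beta>_def by (auto intro!: sum_nonneg mult_nonneg_nonneg prod_nonneg simp: PiE_iff)
        show "1 + (c-1) * (\<Sum>x\<in>PiE B (\<lambda>_. Y). \<bar>\<alpha> x - \<beta> x\<bar>) \<le> 1 + (c-1)*T"
          using T[of u] c unfolding \<alpha>_def \<beta>_def B_def by (simp add: mult_left_mono)
      qed
      finally show ?thesis .
    qed
    have "(\<Sum>D\<in>PiE I (\<lambda>_. Y). W (insert u J) D * f D) = (\<Sum>x\<in>PiE B (\<lambda>_. Y). \<Sum>R\<in>PiE (I-B) (\<lambda>_. Y). \<alpha> x * \<rho> R * f (mg x R))"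
      unfolding sum_PiE_split[OF finI Y(1) BI] W1[symmetric] mg_def ..
    also have "\<dots> = (\<Sum>R\<in>PiE (I-B) (\<lambda>_. Y). \<rho> R * (\<Sum>x\<in>PiE B (\<lambda>_. Y). \<alpha> x * f (mg x R)))"
      by (subst sum.swap) (simp add: sum_distrib_left algebra_simps)
    also have "\<dots> \<le> (\<Sum>R\<in>PiE (I-B) (\<lambda>_. Y). \<rho> R * ((1 + (c-1)*T) * (\<Sum>x\<in>PiE B (\<lambda>_. Y). \<beta> x * f (mg x R))))"
    proof (intro sum_mono mult_left_mono step)
      fix R assume "R \<in> PiE (I-B) (\<lambda>_. Y)"
      thus "0 \<le> \<rho> R" unfolding \<rho>_def wJ_def using an bn by (auto intro!: prod_nonneg simp: PiE_iff)
    qed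
    also have "\<dots> = (1 + (c-1)*T) * (\<Sum>x\<in>PiE B (\<lambda>_. Y). \<Sum>R\<in>PiE (I-B) (\<lambda>_. Y). \<beta> x * \<rho> R * f (mg x R))"
      by (subst sum.swap) (simp add: sum_distrib_left algebra_simps)
    also have "(\<Sum>x\<in>PiE B (\<lambda>_. Y). \<Sum>R\<in>PiE (I-B) (\<lambda>_. Y). \<beta> x * \<rho> R * f (mg x R)) = (\<Sum>D\<in>PiE I (\<lambda>_. Y). W J D * f D)"
      unfolding sum_PiE_split[OF finI Y(1) BI] W2[symmetric] mg_def ..
    also have "(1 + (c-1)*T) * \<dots> \<le> (1 + (c-1)*T) * ((1 + (c-1)*T)^card J * (\<Sum>D\<in>PiE I (\<lambda>_. Y). W {} D * f D))"
      using insert.IH insert.prems c T0 by (intro mult_left_mono) auto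
    finally show ?case using insert.hyps by simp
  qed
  thus ?thesis unfolding W_def I_def by simp
qed


definition pw :: "nat \<Rightarrow> real \<Rightarrow> (nat \<Rightarrow> bool) \<Rightarrow> nat \<Rightarrow> real" where
  "pw h \<delta> v j = (if j < 2*h then (1 + (if v (j div 2) = even j then \<delta> else -\<delta>)) / (2*h) else 0)"

lemma sum_pairs: "(\<Sum>j<2*(h::nat). f j) = (\<Sum>i<h. f (2*i) + f (2*i+1))"
  by (induction h) (auto simp: ac_simps)

lemma pw_nonneg: "\<bar>\<delta>\<bar> \<le> 1 \<Longrightarrow> 0 \<le> pw h \<delta> v j"
  unfolding pw_def by (auto intro!: divide_nonneg_pos)

lemma pw_pair: "i < h \<Longrightarrow> pw h \<delta> v (2*i) + pw h \<delta> v (2*i+1) = 1 / h"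
  unfolding pw_def by (auto simp: field_simps)

lemma pw_diff: "i < h \<Longrightarrow> pw h \<delta> v (2*i) - pw h \<delta> v (2*i+1) = (if v i then \<delta> / h else - \<delta> / h)"
  unfolding pw_def by (auto simp: field_simps)

lemma pw_sum: "1 \<le> h \<Longrightarrow> (\<Sum>j<2*h. pw h \<delta> v j) = 1"
proof -
  assume h: "1 \<le> h"
  have "(\<Sum>j<2*h. pw h \<delta> v j) = (\<Sum>i<h. pw h \<delta> v (2*i) + pw h \<delta> v (2*i+1))" by (rule sum_pairs)
  also have "\<dots> = (\<Sum>i<h. 1 / real h)" by (rule sum.cong) (auto simp only: pw_pair lessThan_iff)
  also have "\<dots> = 1" using h by simp
  finally show ?thesis .
qed

lemma pw_sum_k: "1 \<le> h \<Longrightarrow> 2*h \<le> k \<Longrightarrow> (\<Sum>j<k. pw h \<delta> v j) = 1"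
proof -
  assume h: "1 \<le> h" "2*h \<le> k"
  have "(\<Sum>j<k. pw h \<delta> v j) = (\<Sum>j<2*h. pw h \<delta> v j)"
    using h by (intro sum.mono_neutral_right) (auto simp: pw_def)
  thus ?thesis using pw_sum[OF h(1)] by simp
qed

definition hyp :: "nat \<Rightarrow> real \<Rightarrow> (nat \<Rightarrow> bool) \<Rightarrow> nat pmf" where
  "hyp h \<delta> v = embed_pmf (pw h \<delta> v)"

lemma pmf_hyp:
  assumes "1 \<le> h" "\<bar>\<delta>\<bar> \<le> 1"
  shows "pmf (hyp h \<delta> v) j = pw h \<delta> v j"
proof -
  have "(\<integral>\<^sup>+x. ennreal (pw h \<delta> v x) \<partial>count_space UNIV) = (\<Sum>x<2*h. ennreal (pw h \<delta> v x))"
    by (rule nn_integral_count_space') (auto simp: pw_def)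
  also have "\<dots> = ennreal (\<Sum>x<2*h. pw h \<delta> v x)"
    using assms by (intro sum_ennreal) (auto intro: pw_nonneg)
  also have "\<dots> = 1" using pw_sum[OF assms(1)] by simp
  finally show ?thesis unfolding hyp_def
    using pmf_embed_pmf[of "pw h \<delta> v"] pw_nonneg[OF assms(2)] by auto
qed

lemma hyp_dists:
  assumes "1 \<le> h" "\<bar>\<delta>\<bar> \<le> 1" "2*h \<le> k"
  shows "hyp h \<delta> v \<in> dists k"
proof -
  have "set_pmf (hyp h \<delta> v) \<subseteq> {..<k}"
  proof
    fix j assume "j \<in> set_pmf (hyp h \<delta> v)"
    hence "pw h \<delta> v j \<noteq> 0" using pmf_hyp[OF assms(1,2)] by (simp add: set_pmf_eq)
    thus "j \<in> {..<k}" using assms(3) by (auto simp: pw_def split: if_splits)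
  qed
  thus ?thesis unfolding dists_def by simp
qed

definition lossf :: "nat \<Rightarrow> nat pmf \<Rightarrow> (nat \<Rightarrow> real) \<Rightarrow> real" where
  "lossf k p q = (\<Sum>i<k. \<bar>pmf p i - q i\<bar>)"

lemma finite_datasets: "finite (datasets k s m)"
  unfolding datasets_def by (simp add: finite_PiE)

lemma loss_sum:
  assumes p: "set_pmf p \<subseteq> {..<k}"
  shows "loss k A s m p = (\<Sum>D\<in>datasets k s m. (\<integral>\<^sup>+q. ennreal (lossf k p q) \<partial>A s D) *
            ennreal (\<Prod>z\<in>{..<s}\<times>{..<m}. pmf p (D z)))"
proof -
  have sub: "set_pmf (data_pmf p s m) \<subseteq> datasets k s m"
  proof -
    have "set_pmf (data_pmf p s m) = PiE_dflt ({..<s}\<times>{..<m}) undefined (set_pmf \<circ> (\<lambda>_. p))"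
      unfolding data_pmf_def by (rule set_Pi_pmf) simp
    also have "\<dots> \<subseteq> datasets k s m" using p
      unfolding datasets_def PiE_dflt_def by (auto simp: PiE_def extensional_def Pi_def)
    finally show ?thesis .
  qed
  have "loss k A s m p = (\<Sum>D\<in>datasets k s m. (\<integral>\<^sup>+q. ennreal (lossf k p q) \<partial>A s D) * ennreal (pmf (data_pmf p s m) D))"
    unfolding loss_def lossf_def
    by (rule nn_integral_measure_pmf_support) (use finite_datasets sub in auto)
  also have "\<dots> = (\<Sum>D\<in>datasets k s m. (\<integral>\<^sup>+q. ennreal (lossf k p q) \<partial>A s D) *
            ennreal (\<Prod>z\<in>{..<s}\<times>{..<m}. pmf p (D z)))"
  proof (intro sum.cong refl)
    fix D assume "D \<in> datasets k s m"
    hence "pmf (data_pmf p s m) D = (\<Prod>z\<in>{..<s}\<times>{..<m}. pmf p (D z))"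
      unfolding data_pmf_def datasets_def by (intro pmf_Pi') (auto simp: PiE_def extensional_def)
    thus "(\<integral>\<^sup>+q. ennreal (lossf k p q) \<partial>A s D) * ennreal (pmf (data_pmf p s m) D) =
          (\<integral>\<^sup>+q. ennreal (lossf k p q) \<partial>A s D) * ennreal (\<Prod>z\<in>{..<s}\<times>{..<m}. pmf p (D z))" by simp
  qed
  finally show ?thesis .
qed


definition mism :: "(nat \<Rightarrow> bool) \<Rightarrow> nat \<Rightarrow> (nat \<Rightarrow> real) \<Rightarrow> bool" where
  "mism v i q = (if v i then q (2*i) < q (2*i+1) else q (2*i+1) \<le> q (2*i))"

lemma comp_meas: "j < k \<Longrightarrow> (\<lambda>q. q j) \<in> borel_measurable (out_space k)"
  unfolding out_space_def by (rule measurable_component_singleton) simp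

lemma mism_pred: "2*i+1 < k \<Longrightarrow> Measurable.pred (out_space k) (mism v i)"
  unfolding mism_def using comp_meas[of "2*i" k] comp_meas[of "2*i+1" k]
  by (cases "v i") (simp_all add: borel_measurable_pred_less borel_measurable_le[unfolded Measurable.pred_def[symmetric]])

lemma mism_sets: "2*i+1 < k \<Longrightarrow> {q \<in> space (out_space k). mism v i q} \<in> sets (out_space k)"
  using mism_pred by (simp add: pred_def)

lemma ham_meas:
  assumes "2*h \<le> k"
  shows "(\<lambda>q. real (card {i\<in>{..<h}. mism v i q})) \<in> borel_measurable (out_space k)"
proof -
  have eq: "(\<lambda>q. real (card {i\<in>{..<h}. mism v i q})) = (\<lambda>q. \<Sum>i<h. if mism v i q then 1 else 0)"
    by (auto simp: sum.inter_filter[symmetric])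
  show ?thesis unfolding eq
  proof (intro borel_measurable_sum measurable_If_restrict_space_iff[THEN iffD2] conjI)
    fix i assume "i \<in> {..<h}"
    hence "2*i+1 < k" using assms by auto
    from mism_pred[OF this] show "{q \<in> space (out_space k). mism v i q} \<in> sets (out_space k)" by (simp add: pred_def)
  qed simp_all
qed

lemma pair_bound:
  assumes "i < h" "0 \<le> \<delta>"
  shows "(if mism v i q then \<delta>/h else 0) \<le> \<bar>pw h \<delta> v (2*i) - q (2*i)\<bar> + \<bar>pw h \<delta> v (2*i+1) - q (2*i+1)\<bar>"
  using pw_diff[OF assms(1), of \<delta> v] assms(2) by (auto simp: mism_def split: if_splits)

lemma lossf_ham:
  assumes h: "1 \<le> h" "2*h \<le> k" and d: "0 \<le> \<delta>" "\<delta> \<le> 1"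
  shows "\<delta>/h * card {i\<in>{..<h}. mism v i q} \<le> lossf k (hyp h \<delta> v) q"
proof -
  have "\<delta>/h * card {i\<in>{..<h}. mism v i q} = (\<Sum>i<h. if mism v i q then \<delta>/h else 0)"
    by (simp add: sum.inter_filter[symmetric])
  also have "\<dots> \<le> (\<Sum>i<h. \<bar>pw h \<delta> v (2*i) - q (2*i)\<bar> + \<bar>pw h \<delta> v (2*i+1) - q (2*i+1)\<bar>)"
    by (intro sum_mono pair_bound) (use d in auto)
  also have "\<dots> = (\<Sum>j<2*h. \<bar>pw h \<delta> v j - q j\<bar>)" by (rule sum_pairs[symmetric])
  also have "\<dots> \<le> (\<Sum>j<k. \<bar>pw h \<delta> v j - q j\<bar>)" using h by (intro sum_mono2) auto
  also have "\<dots> = lossf k (hyp h \<delta> v) q" unfolding lossf_def using pmf_hyp[OF h(1)] d by simp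
  finally show ?thesis .
qed

lemma inner_stat:
  assumes M: "prob_space M" "sets M = sets (out_space k)"
    and h: "1 \<le> h" "2*h \<le> k" and d: "0 \<le> \<delta>" "\<delta> \<le> 1"
  shows "ennreal (\<delta>/h * (\<Sum>i<h. measure M {q\<in>space (out_space k). mism v i q}))
          \<le> (\<integral>\<^sup>+q. ennreal (lossf k (hyp h \<delta> v) q) \<partial>M)"
proof -
  interpret prob_space M by fact
  define E where "E i = {q\<in>space (out_space k). mism v i q}" for i
  have Es: "E i \<in> sets M" if "i < h" for i unfolding E_def M(2) using that h by (intro mism_sets) auto
  have "ennreal (\<delta>/h * (\<Sum>i<h. measure M (E i))) = (\<Sum>i<h. ennreal (\<delta>/h) * emeasure M (E i))"
    using d Es by (simp add: sum_distrib_left emeasure_eq_measure ennreal_mult[symmetric] sum_ennreal[symmetric] del: sum_ennreal)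
  also have "\<dots> = (\<Sum>i<h. \<integral>\<^sup>+q. ennreal (\<delta>/h) * indicator (E i) q \<partial>M)"
    using Es by (intro sum.cong refl nn_integral_cmult_indicator[symmetric]) auto
  also have "\<dots> = (\<integral>\<^sup>+q. (\<Sum>i<h. ennreal (\<delta>/h) * indicator (E i) q) \<partial>M)"
    using Es by (intro nn_integral_sum[symmetric]) auto
  also have "\<dots> \<le> (\<integral>\<^sup>+q. ennreal (lossf k (hyp h \<delta> v) q) \<partial>M)"
  proof (intro nn_integral_mono)
    fix q
    have "(\<Sum>i<h. ennreal (\<delta>/h) * indicator (E i) q) = (\<Sum>i<h. ennreal (\<delta>/h * indicator (E i) q))"
      by (intro sum.cong) (auto simp: indicator_def)
    also have "\<dots> = ennreal (\<Sum>i<h. \<delta>/h * indicator (E i) q)"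
      using d by (intro sum_ennreal) (auto simp: indicator_def)
    also have "(\<Sum>i<h. \<delta>/h * indicator (E i) q) \<le> (\<Sum>i<h. if mism v i q then \<delta>/h else 0)"
      using d by (intro sum_mono) (auto simp: E_def indicator_def)
    also have "\<dots> = \<delta>/h * card {i\<in>{..<h}. mism v i q}" by (simp add: sum.inter_filter[symmetric])
    also have "\<dots> \<le> lossf k (hyp h \<delta> v) q" by (rule lossf_ham[OF h d])
    finally show "(\<Sum>i<h. ennreal (\<delta>/h) * indicator (E i) q) \<le> ennreal (lossf k (hyp h \<delta> v) q)"
      by (simp add: ennreal_leI)
  qed
  finally show ?thesis unfolding E_def .
qed

definition Fset :: "nat \<Rightarrow> nat \<Rightarrow> (nat \<Rightarrow> bool) \<Rightarrow> (nat \<Rightarrow> real) set" where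
  "Fset k h v = {q\<in>space (out_space k). card {i\<in>{..<h}. mism v i q} \<le> h div 16}"

lemma Fset_sets: "2*h \<le> k \<Longrightarrow> Fset k h v \<in> sets (out_space k)"
proof -
  assume h: "2*h \<le> k"
  have "Fset k h v = {q\<in>space (out_space k). real (card {i\<in>{..<h}. mism v i q}) \<le> real (h div 16)}"
    unfolding Fset_def by simp
  also have "\<dots> \<in> sets (out_space k)" using ham_meas[OF h, of v] by measurable
  finally show ?thesis .
qed

lemma inner_priv:
  assumes M: "prob_space M" "sets M = sets (out_space k)"
    and h: "1 \<le> h" "2*h \<le> k" and d: "0 \<le> \<delta>" "\<delta> \<le> 1"
  shows "ennreal (\<delta>/16 * (1 - measure M (Fset k h v)))
          \<le> (\<integral>\<^sup>+q. ennreal (lossf k (hyp h \<delta> v) q) \<partial>M)"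
proof -
  interpret prob_space M by fact
  have Fs: "Fset k h v \<in> sets M" using Fset_sets[OF h(2)] M(2) by simp
  have sp: "space M = space (out_space k)" using M(2) by (rule sets_eq_imp_space_eq)
  have "ennreal (\<delta>/16 * (1 - measure M (Fset k h v))) = ennreal (\<delta>/16) * emeasure M (space M - Fset k h v)"
    using d Fs by (simp add: emeasure_eq_measure prob_compl ennreal_mult[symmetric])
  also have "\<dots> = (\<integral>\<^sup>+q. ennreal (\<delta>/16) * indicator (space M - Fset k h v) q \<partial>M)"
    using Fs by (intro nn_integral_cmult_indicator[symmetric]) auto
  also have "\<dots> \<le> (\<integral>\<^sup>+q. ennreal (lossf k (hyp h \<delta> v) q) \<partial>M)"
  proof (intro nn_integral_mono)
    fix q
    show "ennreal (\<delta>/16) * indicator (space M - Fset k h v) q \<le> ennreal (lossf k (hyp h \<delta> v) q)"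
    proof (cases "q \<in> space M - Fset k h v")
      case True
      hence "h div 16 < card {i\<in>{..<h}. mism v i q}" using sp unfolding Fset_def by auto
      hence "real h / 16 \<le> card {i\<in>{..<h}. mism v i q}" by linarith
      hence "\<delta>/16 \<le> \<delta>/h * card {i\<in>{..<h}. mism v i q}"
        using h d by (simp add: field_simps mult_left_mono)
      also have "\<dots> \<le> lossf k (hyp h \<delta> v) q" by (rule lossf_ham[OF h d])
      finally show ?thesis using True by (simp add: ennreal_leI)
    qed simp
  qed
  finally show ?thesis .
qed

lemma loss_lower:
  assumes A: "valid_alg k m A" and p: "set_pmf p \<subseteq> {..<k}"
    and X: "\<And>D. D \<in> datasets k s m \<Longrightarrow> 0 \<le> X D"
    and XL: "\<And>D. D \<in> datasets k s m \<Longrightarrow> ennreal (X D) \<le> (\<integral>\<^sup>+q. ennreal (lossf k p q) \<partial>A s D)"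
    and L: "loss k A s m p \<le> ennreal \<alpha>" and a: "0 \<le> \<alpha>"
  shows "(\<Sum>D\<in>datasets k s m. X D * (\<Prod>z\<in>{..<s}\<times>{..<m}. pmf p (D z))) \<le> \<alpha>"
proof -
  have "ennreal (\<Sum>D\<in>datasets k s m. X D * (\<Prod>z\<in>{..<s}\<times>{..<m}. pmf p (D z)))
      = (\<Sum>D\<in>datasets k s m. ennreal (X D) * ennreal (\<Prod>z\<in>{..<s}\<times>{..<m}. pmf p (D z)))"
    using X by (subst sum_ennreal[symmetric]) (auto intro!: sum.cong mult_nonneg_nonneg prod_nonneg ennreal_mult)
  also have "\<dots> \<le> (\<Sum>D\<in>datasets k s m. (\<integral>\<^sup>+q. ennreal (lossf k p q) \<partial>A s D) * ennreal (\<Prod>z\<in>{..<s}\<times>{..<m}. pmf p (D z)))"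
    by (intro sum_mono mult_right_mono XL) auto
  also have "\<dots> = loss k A s m p" by (rule loss_sum[OF p, symmetric])
  also have "\<dots> \<le> ennreal \<alpha>" by (rule L)
  finally show ?thesis using a by (simp add: ennreal_le_iff)
qed


lemma chi_pair_ineq:
  fixes \<delta> h :: real
  assumes "0 \<le> \<delta>" "\<delta> \<le> 1/2" "0 < h"
  shows "((1+\<delta>)/(2*h))\<^sup>2 / ((1-\<delta>)/(2*h)) + ((1-\<delta>)/(2*h))\<^sup>2 / ((1+\<delta>)/(2*h)) \<le> 1/h + 6*\<delta>\<^sup>2/h"
proof -
  have e: "((1+\<delta>)/(2*h))\<^sup>2 / ((1-\<delta>)/(2*h)) + ((1-\<delta>)/(2*h))\<^sup>2 / ((1+\<delta>)/(2*h))
      = ((1+\<delta>)^3 + (1-\<delta>)^3) / (2*h*(1-\<delta>)*(1+\<delta>))"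
  proof -
    have g: "(y/c)\<^sup>2/(x/c) + (x/c)\<^sup>2/(y/c) = (y^3 + x^3)/(c*x*y)" if "x > 0" "y > 0" "c > 0" for x y c :: real
    proof -
      have "(y/c)\<^sup>2/(x/c) = y\<^sup>2/(c*x)" using that by (simp add: power2_eq_square field_simps)
      moreover have "(x/c)\<^sup>2/(y/c) = x\<^sup>2/(c*y)" using that by (simp add: power2_eq_square field_simps)
      moreover have "y\<^sup>2/(c*x) + x\<^sup>2/(c*y) = (y^3 + x^3)/(c*x*y)" using that
        by (simp add: field_simps power2_eq_square power3_eq_cube)
      ultimately show ?thesis by simp
    qed
    show ?thesis using g[of "1-\<delta>" "1+\<delta>" "2*h"] assms by (simp add: mult.assoc)
  qed
  have d4: "\<delta>^4 \<le> \<delta>\<^sup>2/4"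
  proof -
    have "\<delta>*\<delta> \<le> (1/2)*(1/2)" using assms by (intro mult_mono) auto
    hence "\<delta>\<^sup>2 * \<delta>\<^sup>2 \<le> \<delta>\<^sup>2 * (1/4)" by (intro mult_left_mono) (auto simp: power2_eq_square)
    thus ?thesis by (simp add: power4_eq_xxxx power2_eq_square)
  qed
  have num: "(1+\<delta>)^3 + (1-\<delta>)^3 \<le> (1 + 6*\<delta>\<^sup>2) * 2*((1-\<delta>)*(1+\<delta>))"
  proof -
    have "(1+\<delta>)^3 + (1-\<delta>)^3 = 2 + 6*\<delta>\<^sup>2" by (simp add: power2_eq_square power3_eq_cube algebra_simps)
    moreover have "(1 + 6*\<delta>\<^sup>2) * 2*((1-\<delta>)*(1+\<delta>)) = 2 + 10*\<delta>\<^sup>2 - 12*\<delta>^4"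
      by (simp add: power2_eq_square power4_eq_xxxx algebra_simps)
    moreover have "0 \<le> \<delta>^4" by simp
    ultimately show ?thesis using d4 by linarith
  qed
  have pos: "0 < 2*h*(1-\<delta>)*(1+\<delta>)" using assms by simp
  have "((1+\<delta>)^3 + (1-\<delta>)^3) / (2*h*(1-\<delta>)*(1+\<delta>)) \<le> (1 + 6*\<delta>\<^sup>2) * 2*((1-\<delta>)*(1+\<delta>)) / (2*h*(1-\<delta>)*(1+\<delta>))"
    using num pos by (intro divide_right_mono) auto
  also have "\<dots> = ((1 + 6*\<delta>\<^sup>2) * (2*((1-\<delta>)*(1+\<delta>)))) / (h * (2*((1-\<delta>)*(1+\<delta>))))"
    by (simp only: mult_ac)
  also have "\<dots> = (1 + 6*\<delta>\<^sup>2) / h"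
    using pos by (intro nonzero_mult_divide_mult_cancel_right) (auto simp: mult.assoc)
  also have "\<dots> = 1/h + 6*\<delta>\<^sup>2/h" by (simp add: add_divide_distrib)
  finally show ?thesis using e by simp
qed

lemma pw_pos: "j < 2*h \<Longrightarrow> \<bar>\<delta>\<bar> < 1 \<Longrightarrow> 0 < pw h \<delta> v j"
  unfolding pw_def by (auto intro!: divide_pos_pos)

lemma pw_upd_other: "j \<noteq> i \<Longrightarrow> pw h \<delta> (v(i:=b)) (2*j) = pw h \<delta> v (2*j)"
  "j \<noteq> i \<Longrightarrow> pw h \<delta> (v(i:=b)) (2*j+1) = pw h \<delta> v (2*j+1)"
  unfolding pw_def by auto

lemma chi_bound:
  assumes h: "1 \<le> h" "2*h \<le> k" and d: "0 \<le> \<delta>" "\<delta> \<le> 1/2" and i: "i < h" "v i"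
  shows "(\<Sum>y<k. (pw h \<delta> v y)\<^sup>2 / pw h \<delta> (v(i:=False)) y) \<le> 1 + 6*\<delta>\<^sup>2/h"
proof -
  define t where "t y = (pw h \<delta> v y)\<^sup>2 / pw h \<delta> (v(i:=False)) y" for y
  have "(\<Sum>y<k. t y) = (\<Sum>y<2*h. t y)"
    using h by (intro sum.mono_neutral_right) (auto simp: t_def pw_def)
  also have "\<dots> = (\<Sum>j<h. t (2*j) + t (2*j+1))" by (rule sum_pairs)
  also have "\<dots> \<le> (\<Sum>j<h. 1/h + (if j = i then 6*\<delta>\<^sup>2/h else 0))"
  proof (rule sum_mono)
    fix j assume j: "j \<in> {..<h}"
    show "t (2*j) + t (2*j+1) \<le> 1/h + (if j = i then 6*\<delta>\<^sup>2/h else 0)"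
    proof (cases "j = i")
      case False
      have p1: "0 < pw h \<delta> v (2*j)" "0 < pw h \<delta> v (2*j+1)" using j d by (auto intro!: pw_pos)
      have "t (2*j) = pw h \<delta> v (2*j)" unfolding t_def pw_upd_other[OF False]
        using p1 by (simp add: power2_eq_square)
      moreover have "t (2*j+1) = pw h \<delta> v (2*j+1)" unfolding t_def pw_upd_other[OF False]
        using p1 by (simp add: power2_eq_square)
      ultimately show ?thesis using pw_pair[of j h \<delta> v] j False by simp
    next
      case True
      have "pw h \<delta> v (2*j) = (1+\<delta>)/(2*h)" "pw h \<delta> v (2*j+1) = (1-\<delta>)/(2*h)"
           "pw h \<delta> (v(i:=False)) (2*j) = (1-\<delta>)/(2*h)" "pw h \<delta> (v(i:=False)) (2*j+1) = (1+\<delta>)/(2*h)"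
        using True i j unfolding pw_def by auto
      hence "t (2*j) + t (2*j+1) = ((1+\<delta>)/(2*h))\<^sup>2 / ((1-\<delta>)/(2*h)) + ((1-\<delta>)/(2*h))\<^sup>2 / ((1+\<delta>)/(2*h))"
        unfolding t_def by simp
      also have "\<dots> \<le> 1/h + 6*\<delta>\<^sup>2/h" using chi_pair_ineq[of \<delta> "real h"] d h by simp
      finally show ?thesis using True by simp
    qed
  qed
  also have "\<dots> = 1 + 6*\<delta>\<^sup>2/h" using h i by (simp add: sum.distrib)
  finally show ?thesis unfolding t_def .
qed

lemma pair_tv:
  assumes h: "1 \<le> h" "2*h \<le> k" and d: "0 \<le> \<delta>" "\<delta> \<le> 1/2" and i: "i < h" "v i"
  shows "(\<Sum>D\<in>datasets k s m. \<bar>(\<Prod>z\<in>{..<s}\<times>{..<m}. pw h \<delta> v (D z)) - (\<Prod>z\<in>{..<s}\<times>{..<m}. pw h \<delta> (v(i:=False)) (D z))\<bar>)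
     \<le> sqrt ((1 + 6*\<delta>\<^sup>2/h) ^ (s*m) - 1)"
proof -
  have "(\<Sum>D\<in>datasets k s m. \<bar>(\<Prod>z\<in>{..<s}\<times>{..<m}. pw h \<delta> v (D z)) - (\<Prod>z\<in>{..<s}\<times>{..<m}. pw h \<delta> (v(i:=False)) (D z))\<bar>)
     \<le> sqrt ((\<Sum>y<k. (pw h \<delta> v y)\<^sup>2 / pw h \<delta> (v(i:=False)) y) ^ card ({..<s}\<times>{..<m}) - 1)"
    unfolding datasets_def
  proof (rule tv_chi2)
    show "0 \<le> pw h \<delta> v y" "0 \<le> pw h \<delta> (v(i:=False)) y" for y using d by (auto intro!: pw_nonneg)
    show "pw h \<delta> v y = 0" if "pw h \<delta> (v(i:=False)) y = 0" for y
      using that pw_pos[of y h \<delta> "v(i:=False)"] d by (auto simp: pw_def split: if_splits)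
    show "sum (pw h \<delta> v) {..<k} = 1" "sum (pw h \<delta> (v(i:=False))) {..<k} = 1" using pw_sum_k h by auto
  qed auto
  also have "\<dots> \<le> sqrt ((1 + 6*\<delta>\<^sup>2/h) ^ (s*m) - 1)"
  proof -
    have "0 \<le> (\<Sum>y<k. (pw h \<delta> v y)\<^sup>2 / pw h \<delta> (v(i:=False)) y)"
      using d by (intro sum_nonneg divide_nonneg_nonneg) (auto intro!: pw_nonneg)
    hence "(\<Sum>y<k. (pw h \<delta> v y)\<^sup>2 / pw h \<delta> (v(i:=False)) y) ^ (s*m) \<le> (1 + 6*\<delta>\<^sup>2/h) ^ (s*m)"
      using chi_bound[of h k \<delta> i v, OF h d i] by (intro power_mono) auto
    thus ?thesis by (simp add: card_cartesian_product)
  qed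
  finally show ?thesis .
qed


definition cube :: "nat \<Rightarrow> (nat \<Rightarrow> bool) set" where
  "cube h = PiE {..<h} (\<lambda>_. UNIV)"

lemma finite_cube: "finite (cube h)"
  unfolding cube_def by (simp add: finite_PiE)

lemma card_cube: "card (cube h) = 2^h"
  unfolding cube_def by (simp add: card_PiE)

lemma cube_split:
  fixes g :: "(nat \<Rightarrow> bool) \<Rightarrow> real"
  assumes i: "i < h"
  shows "(\<Sum>v\<in>cube h. g v) = (\<Sum>v\<in>{v\<in>cube h. v i}. g v + g (v(i:=False)))"
proof -
  have bij: "bij_betw (\<lambda>v. v(i:=False)) {v\<in>cube h. v i} {v\<in>cube h. \<not> v i}"
    by (rule bij_betw_byWitness[where f'="\<lambda>v. v(i:=True)"])
       (use i in \<open>auto simp: cube_def PiE_def extensional_def fun_upd_idem\<close>)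
  have "(\<Sum>v\<in>cube h. g v) = (\<Sum>v\<in>{v\<in>cube h. v i}. g v) + (\<Sum>v\<in>{v\<in>cube h. \<not> v i}. g v)"
    using finite_cube by (subst sum.union_disjoint[symmetric]) (auto intro!: sum.cong)
  also have "(\<Sum>v\<in>{v\<in>cube h. \<not> v i}. g v) = (\<Sum>v\<in>{v\<in>cube h. v i}. g (v(i:=False)))"
    using sum.reindex_bij_betw[OF bij, of g] by simp
  finally show ?thesis by (simp add: sum.distrib)
qed

lemma card_cube_half:
  assumes "i < h"
  shows "real (card {v\<in>cube h. v i}) = real (card (cube h)) / 2"
  using cube_split[OF assms, of "\<lambda>_. 1"] by simp

lemma exp_fifth: "exp (1/5::real) \<le> 5/4"
proof -
  have "exp (1/5::real) \<le> 1 + 1/5 + (1/5)\<^sup>2" by (rule exp_bound) auto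
  thus ?thesis by (simp add: power2_eq_square)
qed

lemma stat_lb:
  assumes k: "2 \<le> k" and A: "valid_alg k m A" and a: "0 < \<alpha>" "\<alpha> \<le> 1/16"
    and L: "(SUP p\<in>dists k. loss k A s m p) \<le> ennreal \<alpha>"
  shows "real (k div 2) / (1920 * \<alpha>\<^sup>2) < real (s*m)"
proof (rule ccontr)
  assume "\<not> ?thesis"
  hence n: "real (s*m) \<le> real (k div 2) / (1920 * \<alpha>\<^sup>2)" by simp
  define h where "h = k div 2"
  define \<delta> where "\<delta> = 8*\<alpha>"
  have h: "1 \<le> h" "2*h \<le> k" using k unfolding h_def by auto
  have d: "0 \<le> \<delta>" "\<delta> \<le> 1/2" "\<bar>\<delta>\<bar> \<le> 1" using a unfolding \<delta>_def by auto
  define ew where "ew v D = (\<Prod>z\<in>{..<s}\<times>{..<m}. pw h \<delta> v (D z))" for v D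
  define Em where "Em v i D = measure (A s D) {q\<in>space (out_space k). mism v i q}" for v i D
  have AD: "prob_space (A s D)" "sets (A s D) = sets (out_space k)" if "D \<in> datasets k s m" for D
    using A that unfolding valid_alg_def by auto
  have Em01: "0 \<le> Em v i D" "Em v i D \<le> 1" if "D \<in> datasets k s m" for v i D
    unfolding Em_def using AD[OF that] by (auto simp: prob_space.prob_le_1)
  have ew0: "0 \<le> ew v D" for v D unfolding ew_def using d by (auto intro!: prod_nonneg pw_nonneg)
  have ew1: "(\<Sum>D\<in>datasets k s m. ew v D) = 1" for v
    unfolding ew_def datasets_def using sum_prod_PiE_pow[of "{..<s}\<times>{..<m}" "{..<k}" "pw h \<delta> v"] pw_sum_k[OF h] by simp
  have key1: "(\<Sum>D\<in>datasets k s m. (\<delta>/h * (\<Sum>i<h. Em v i D)) * ew v D) \<le> \<alpha>" for v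
  proof -
    have hd: "hyp h \<delta> v \<in> dists k" using hyp_dists[OF h(1) d(3) h(2)] .
    have Lv: "loss k A s m (hyp h \<delta> v) \<le> ennreal \<alpha>"
      using L hd by (meson SUP_upper order_trans)
    have "(\<Sum>D\<in>datasets k s m. (\<delta>/h * (\<Sum>i<h. Em v i D)) * (\<Prod>z\<in>{..<s}\<times>{..<m}. pmf (hyp h \<delta> v) (D z))) \<le> \<alpha>"
    proof (rule loss_lower[OF A _ _ _ Lv])
      show "set_pmf (hyp h \<delta> v) \<subseteq> {..<k}" using hd unfolding dists_def by simp
      show "0 \<le> \<delta>/h * (\<Sum>i<h. Em v i D)" if "D \<in> datasets k s m" for D
        using Em01[OF that] d by (intro mult_nonneg_nonneg divide_nonneg_nonneg sum_nonneg) auto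
      show "ennreal (\<delta>/h * (\<Sum>i<h. Em v i D)) \<le> (\<integral>\<^sup>+q. ennreal (lossf k (hyp h \<delta> v) q) \<partial>A s D)"
        if "D \<in> datasets k s m" for D
        unfolding Em_def using inner_stat[OF AD[OF that] h d(1)] d by simp
    qed (use a in simp)
    thus ?thesis unfolding ew_def using pmf_hyp[OF h(1) d(3)] by simp
  qed
  have tv: "(\<Sum>D\<in>datasets k s m. \<bar>ew v D - ew (v(i:=False)) D\<bar>) \<le> 1/2" if i: "i < h" "v i" for v i
  proof -
    have "(\<Sum>D\<in>datasets k s m. \<bar>ew v D - ew (v(i:=False)) D\<bar>) \<le> sqrt ((1 + 6*\<delta>\<^sup>2/h) ^ (s*m) - 1)"
      unfolding ew_def by (rule pair_tv[of h k \<delta> i v, OF h d(1,2) i])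
    also have "\<dots> \<le> sqrt (1/4)"
    proof (rule real_sqrt_le_mono)
      have x0: "0 \<le> 6*\<delta>\<^sup>2/h" by simp
      have "(1 + 6*\<delta>\<^sup>2/h) ^ (s*m) \<le> exp (6*\<delta>\<^sup>2/h) ^ (s*m)"
        using x0 by (intro power_mono) auto
      also have "\<dots> = exp (real (s*m) * (6*\<delta>\<^sup>2/h))" by (rule exp_of_nat_mult[symmetric])
      also have "real (s*m) * (6*\<delta>\<^sup>2/h) \<le> 1/5"
      proof -
        have "real (s*m) * (6*\<delta>\<^sup>2/h) \<le> real h / (1920 * \<alpha>\<^sup>2) * (6*\<delta>\<^sup>2/h)"
          using n x0 unfolding h_def by (intro mult_right_mono) auto
        also have "\<dots> = 1/5" using a h unfolding \<delta>_def by (simp add: field_simps power2_eq_square)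
        finally show ?thesis .
      qed
      hence "exp (real (s*m) * (6*\<delta>\<^sup>2/h)) \<le> exp (1/5)" by simp
      also have "\<dots> \<le> 5/4" by (rule exp_fifth)
      finally show "(1 + 6*\<delta>\<^sup>2/h) ^ (s*m) - 1 \<le> 1/4" by simp
    qed
    also have "sqrt (1/4::real) = 1/2" by (simp add: real_sqrt_divide)
    finally show ?thesis .
  qed
  have pairb: "1/2 \<le> (\<Sum>D\<in>datasets k s m. Em v i D * ew v D) + (\<Sum>D\<in>datasets k s m. Em (v(i:=False)) i D * ew (v(i:=False)) D)"
    if i: "i < h" "v i" for v i
  proof -
    have comp: "Em (v(i:=False)) i D = 1 - Em v i D" if D: "D \<in> datasets k s m" for D
    proof -
      interpret prob_space "A s D" using AD[OF D] by simp
      have sp: "space (A s D) = space (out_space k)" using AD(2)[OF D] by (rule sets_eq_imp_space_eq)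
      have Es: "{q\<in>space (out_space k). mism v i q} \<in> events" using AD[OF D] h i by (auto intro!: mism_sets)
      have "{q\<in>space (out_space k). mism (v(i:=False)) i q} = space (A s D) - {q\<in>space (out_space k). mism v i q}"
        using i sp by (auto simp: mism_def)
      thus ?thesis unfolding Em_def using prob_compl[OF Es] by simp
    qed
    have "(\<Sum>D\<in>datasets k s m. Em v i D * ew v D) + (\<Sum>D\<in>datasets k s m. Em (v(i:=False)) i D * ew (v(i:=False)) D)
        = (\<Sum>D\<in>datasets k s m. ew (v(i:=False)) D) + (\<Sum>D\<in>datasets k s m. Em v i D * (ew v D - ew (v(i:=False)) D))"
      unfolding sum.distrib[symmetric] by (intro sum.cong refl) (simp add: comp algebra_simps)
    also have "\<dots> \<ge> 1 - (\<Sum>D\<in>datasets k s m. \<bar>ew v D - ew (v(i:=False)) D\<bar>)"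
    proof -
      have "- (\<Sum>D\<in>datasets k s m. \<bar>ew v D - ew (v(i:=False)) D\<bar>) \<le> (\<Sum>D\<in>datasets k s m. Em v i D * (ew v D - ew (v(i:=False)) D))"
        unfolding sum_negf[symmetric]
      proof (rule sum_mono)
        fix D assume D: "D \<in> datasets k s m"
        have "\<bar>Em v i D * (ew v D - ew (v(i:=False)) D)\<bar> \<le> 1 * \<bar>ew v D - ew (v(i:=False)) D\<bar>"
          unfolding abs_mult using Em01[OF D] by (intro mult_right_mono) auto
        hence "\<bar>Em v i D * (ew v D - ew (v(i:=False)) D)\<bar> \<le> \<bar>ew v D - ew (v(i:=False)) D\<bar>" by simp
        thus "- \<bar>ew v D - ew (v(i:=False)) D\<bar> \<le> Em v i D * (ew v D - ew (v(i:=False)) D)"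
          using abs_ge_minus_self[of "Em v i D * (ew v D - ew (v(i:=False)) D)"] by linarith
      qed
      thus ?thesis using ew1 by simp
    qed
    finally show ?thesis using tv[of i v, OF i] by linarith
  qed
  have Si: "real (card (cube h)) / 4 \<le> (\<Sum>v\<in>cube h. \<Sum>D\<in>datasets k s m. Em v i D * ew v D)" if i: "i < h" for i
  proof -
    have "real (card (cube h)) / 4 = (\<Sum>v\<in>{v\<in>cube h. v i}. 1/2)" using card_cube_half[OF i] by simp
    also have "\<dots> \<le> (\<Sum>v\<in>{v\<in>cube h. v i}. (\<Sum>D\<in>datasets k s m. Em v i D * ew v D) + (\<Sum>D\<in>datasets k s m. Em (v(i:=False)) i D * ew (v(i:=False)) D))"
      using i by (intro sum_mono pairb) auto
    also have "\<dots> = (\<Sum>v\<in>cube h. \<Sum>D\<in>datasets k s m. Em v i D * ew v D)"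
      by (rule cube_split[OF i, symmetric])
    finally show ?thesis .
  qed
  have "\<delta>/h * (\<Sum>i<h. real (card (cube h)) / 4) \<le> \<delta>/h * (\<Sum>i<h. \<Sum>v\<in>cube h. \<Sum>D\<in>datasets k s m. Em v i D * ew v D)"
    using d by (intro mult_left_mono sum_mono Si) auto
  also have "\<dots> = (\<Sum>v\<in>cube h. \<Sum>D\<in>datasets k s m. (\<delta>/h * (\<Sum>i<h. Em v i D)) * ew v D)"
    by (simp add: sum_distrib_left sum_distrib_right sum.swap[of _ "{..<h}"] algebra_simps)
  also have "\<dots> \<le> (\<Sum>v\<in>cube h. \<alpha>)" by (intro sum_mono key1)
  finally have "\<delta>/h * (h * (real (card (cube h)) / 4)) \<le> card (cube h) * \<alpha>" by simp
  hence "\<delta> * real (card (cube h)) / 4 \<le> card (cube h) * \<alpha>" using h by (simp add: field_simps)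
  moreover have "0 < real (card (cube h))" by (simp add: card_cube)
  ultimately have "\<delta> / 4 \<le> \<alpha>" by (simp add: field_simps mult.commute)
  thus False using a unfolding \<delta>_def by simp
qed


lemma count_ball:
  "(\<Sum>v\<in>cube h. indicator (Fset k h v) q) \<le> (16::real)^(h div 16) * (17/16)^h"
proof -
  define r where "r = h div 16"
  define g where "g i b = (if (if b then q (2*i) < q (2*i+1) else q (2*i+1) \<le> q (2*i)) then 1/16 else (1::real))" for i b
  have pt: "indicator (Fset k h v) q \<le> 16^r * (\<Prod>i<h. g i (v i))" for v
  proof -
    have "(\<Prod>i<h. g i (v i)) = (\<Prod>i\<in>{i\<in>{..<h}. mism v i q}. 1/16)"
      by (subst prod.inter_filter) (auto simp: g_def mism_def intro!: prod.cong)
    also have "\<dots> = (1/16) ^ card {i\<in>{..<h}. mism v i q}" by simp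
    finally have e: "(\<Prod>i<h. g i (v i)) = (1/16) ^ card {i\<in>{..<h}. mism v i q}" .
    show ?thesis
    proof (cases "q \<in> Fset k h v")
      case True
      hence c: "card {i\<in>{..<h}. mism v i q} \<le> r" unfolding Fset_def r_def by simp
      have "(1/16::real)^r \<le> (1/16) ^ card {i\<in>{..<h}. mism v i q}"
        using c by (intro power_decreasing) auto
      hence "16^r * (1/16::real)^r \<le> 16^r * (1/16) ^ card {i\<in>{..<h}. mism v i q}" by simp
      moreover have "16^r * (1/16::real)^r = 1" by (simp add: power_one_over)
      ultimately show ?thesis using True e by simp
    next
      case False
      have "0 \<le> (\<Prod>i<h. g i (v i))" by (auto simp: g_def intro!: prod_nonneg)
      thus ?thesis using False by simp
    qed
  qed
  have "(\<Sum>v\<in>cube h. indicator (Fset k h v) q) \<le> (\<Sum>v\<in>cube h. 16^r * (\<Prod>i<h. g i (v i)))"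
    by (intro sum_mono pt)
  also have "\<dots> = 16^r * (\<Prod>i<h. \<Sum>b\<in>UNIV. g i b)"
    unfolding cube_def sum_distrib_left[symmetric] by (subst prod_sum_PiE) auto
  also have "(\<Prod>i<h. \<Sum>b\<in>UNIV. g i b) = (\<Prod>i<h. 17/16)"
    by (intro prod.cong) (auto simp: UNIV_bool g_def)
  finally show ?thesis unfolding r_def by simp
qed

lemma sum_Fset_measure:
  assumes M: "prob_space M" "sets M = sets (out_space k)" and h: "2*h \<le> k"
  shows "(\<Sum>v\<in>cube h. measure M (Fset k h v)) \<le> (16::real)^(h div 16) * (17/16)^h"
proof -
  interpret prob_space M by fact
  have Fs: "Fset k h v \<in> sets M" for v using Fset_sets[OF h] M(2) by simp
  have "ennreal (\<Sum>v\<in>cube h. measure M (Fset k h v)) = (\<Sum>v\<in>cube h. emeasure M (Fset k h v))"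
    by (simp add: emeasure_eq_measure sum_ennreal[symmetric] del: sum_ennreal)
  also have "\<dots> = (\<Sum>v\<in>cube h. \<integral>\<^sup>+q. indicator (Fset k h v) q \<partial>M)"
    using Fs by (intro sum.cong refl nn_integral_indicator[symmetric]) auto
  also have "\<dots> = (\<integral>\<^sup>+q. (\<Sum>v\<in>cube h. indicator (Fset k h v) q) \<partial>M)"
    using Fs by (intro nn_integral_sum[symmetric]) auto
  also have "\<dots> \<le> (\<integral>\<^sup>+q. ennreal ((16::real)^(h div 16) * (17/16)^h) \<partial>M)"
  proof (intro nn_integral_mono)
    fix q
    have "(\<Sum>v\<in>cube h. indicator (Fset k h v) q :: ennreal) = (\<Sum>v\<in>cube h. ennreal (indicator (Fset k h v) q))"
      by (intro sum.cong) (auto simp: indicator_def)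
    also have "\<dots> = ennreal (\<Sum>v\<in>cube h. indicator (Fset k h v) q)"
      by (intro sum_ennreal) auto
    finally have "(\<Sum>v\<in>cube h. indicator (Fset k h v) q :: ennreal) = ennreal (\<Sum>v\<in>cube h. indicator (Fset k h v) q)" .
    thus "(\<Sum>v\<in>cube h. indicator (Fset k h v) q :: ennreal) \<le> ennreal ((16::real)^(h div 16) * (17/16)^h)"
      using count_ball[where h=h and k=k and q=q] by (simp add: ennreal_leI)
  qed
  also have "\<dots> = ennreal ((16::real)^(h div 16) * (17/16)^h)" by (simp add: emeasure_space_1)
  finally show ?thesis by (simp add: ennreal_le_iff)
qed


lemma chi_unif:
  assumes h: "1 \<le> h" "2*h \<le> k"
  shows "(\<Sum>y<k. (pw h \<delta> v y)\<^sup>2 / pw h 0 v y) = 1 + \<delta>\<^sup>2"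
proof -
  define t where "t y = (pw h \<delta> v y)\<^sup>2 / pw h 0 v y" for y
  have "(\<Sum>y<k. t y) = (\<Sum>y<2*h. t y)"
    using h by (intro sum.mono_neutral_right) (auto simp: t_def pw_def)
  also have "\<dots> = (\<Sum>j<h. t (2*j) + t (2*j+1))" by (rule sum_pairs)
  also have "\<dots> = (\<Sum>j<h. (1 + \<delta>\<^sup>2) / h)"
  proof (intro sum.cong refl)
    fix j assume j: "j \<in> {..<h}"
    have p0: "pw h 0 v (2*j) = 1/(2*real h)" "pw h 0 v (2*j+1) = 1/(2*real h)" using j unfolding pw_def by auto
    have gen: "(a/c)\<^sup>2 + (b/c)\<^sup>2 = (a\<^sup>2+b\<^sup>2)/(c\<^sup>2::real)" for a b c by (simp add: power_divide add_divide_distrib)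
    have "(pw h \<delta> v (2*j))\<^sup>2 + (pw h \<delta> v (2*j+1))\<^sup>2 = ((1+\<delta>)/(2*real h))\<^sup>2 + ((1-\<delta>)/(2*real h))\<^sup>2"
      using j unfolding pw_def by (cases "v j") (simp_all add: add.commute)
    also have "\<dots> = ((1+\<delta>)\<^sup>2 + (1-\<delta>)\<^sup>2) / (2*real h)\<^sup>2" by (rule gen)
    finally have sq: "(pw h \<delta> v (2*j))\<^sup>2 + (pw h \<delta> v (2*j+1))\<^sup>2 = ((1+\<delta>)\<^sup>2 + (1-\<delta>)\<^sup>2) / (2*real h)\<^sup>2" .
    have "t (2*j) + t (2*j+1) = ((pw h \<delta> v (2*j))\<^sup>2 + (pw h \<delta> v (2*j+1))\<^sup>2) * (2*real h)"
      unfolding t_def p0 by (simp add: algebra_simps)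
    also have "\<dots> = ((1+\<delta>)\<^sup>2 + (1-\<delta>)\<^sup>2) / (2*real h)\<^sup>2 * (2*real h)" unfolding sq by (rule refl)
    also have "\<dots> = (1 + \<delta>\<^sup>2) / h" using h by (simp add: power2_eq_square field_simps)
    finally show "t (2*j) + t (2*j+1) = (1 + \<delta>\<^sup>2) / h" .
  qed
  also have "\<dots> = 1 + \<delta>\<^sup>2" using h by simp
  finally show ?thesis unfolding t_def .
qed

lemma tv_le2:
  fixes a b :: "'b \<Rightarrow> real"
  assumes fin: "finite I" "finite Y"
    and nn: "\<And>y. y\<in>Y \<Longrightarrow> 0 \<le> a y" "\<And>y. y\<in>Y \<Longrightarrow> 0 \<le> b y"
    and sa: "sum a Y = 1" and sb: "sum b Y = 1"
  shows "(\<Sum>D\<in>PiE I (\<lambda>_. Y). \<bar>(\<Prod>z\<in>I. a (D z)) - (\<Prod>z\<in>I. b (D z))\<bar>) \<le> 2"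
proof -
  have "(\<Sum>D\<in>PiE I (\<lambda>_. Y). \<bar>(\<Prod>z\<in>I. a (D z)) - (\<Prod>z\<in>I. b (D z))\<bar>)
      \<le> (\<Sum>D\<in>PiE I (\<lambda>_. Y). (\<Prod>z\<in>I. a (D z)) + (\<Prod>z\<in>I. b (D z)))"
  proof (intro sum_mono)
    fix D assume D: "D \<in> PiE I (\<lambda>_. Y)"
    have "0 \<le> (\<Prod>z\<in>I. a (D z))" "0 \<le> (\<Prod>z\<in>I. b (D z))" using D nn by (auto intro!: prod_nonneg)
    thus "\<bar>(\<Prod>z\<in>I. a (D z)) - (\<Prod>z\<in>I. b (D z))\<bar> \<le> (\<Prod>z\<in>I. a (D z)) + (\<Prod>z\<in>I. b (D z))" by linarith
  qed
  also have "\<dots> = 2" using sum_prod_PiE_pow[OF fin, of a] sum_prod_PiE_pow[OF fin, of b] sa sb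
    by (simp add: sum.distrib)
  finally show ?thesis .
qed

lemma user_tv:
  fixes m u :: nat
  assumes h: "1 \<le> h" "2*h \<le> k" and d: "0 \<le> \<delta>" "\<delta> \<le> 1/2"
  shows "(\<Sum>x\<in>PiE ({u}\<times>{..<m}) (\<lambda>_. {..<k}). \<bar>(\<Prod>z\<in>{u}\<times>{..<m}. pw h \<delta> v (x z)) - (\<Prod>z\<in>{u}\<times>{..<m}. pw h 0 v (x z))\<bar>)
     \<le> 2 * sqrt (real m) * \<delta>"
proof -
  let ?S = "(\<Sum>x\<in>PiE ({u}\<times>{..<m}) (\<lambda>_. {..<k}). \<bar>(\<Prod>z\<in>{u}\<times>{..<m}. pw h \<delta> v (x z)) - (\<Prod>z\<in>{u}\<times>{..<m}. pw h 0 v (x z))\<bar>)"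
  have s1: "sum (pw h \<delta> v) {..<k} = 1" "sum (pw h 0 v) {..<k} = 1" using pw_sum_k h by auto
  have finB: "finite ({u}\<times>{..<m})" by simp
  have le2: "?S \<le> 2"
    by (rule tv_le2[OF finB]) (use d s1 in \<open>auto intro!: pw_nonneg simp: finite_cartesian_product\<close>)
  have "?S \<le> sqrt ((\<Sum>y<k. (pw h \<delta> v y)\<^sup>2 / pw h 0 v y) ^ card ({u}\<times>{..<m}) - 1)"
  proof (rule tv_chi2)
    show "pw h \<delta> v y = 0" if "pw h 0 v y = 0" for y using that h by (auto simp: pw_def split: if_splits)
  qed (use d s1 in \<open>auto intro!: pw_nonneg\<close>)
  hence chi: "?S \<le> sqrt ((1 + \<delta>\<^sup>2) ^ m - 1)" using chi_unif[OF h, of \<delta> v] by (simp add: card_cartesian_product)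
  show ?thesis
  proof (cases "m * \<delta>\<^sup>2 \<le> 1")
    case True
    have "(1 + \<delta>\<^sup>2) ^ m \<le> exp (\<delta>\<^sup>2) ^ m" by (intro power_mono) auto
    also have "\<dots> = exp (m * \<delta>\<^sup>2)" by (rule exp_of_nat_mult[symmetric])
    also have "\<dots> \<le> 1 + m*\<delta>\<^sup>2 + (m*\<delta>\<^sup>2)\<^sup>2" using True by (intro exp_bound) auto
    also have "\<dots> \<le> 1 + 4 * (m * \<delta>\<^sup>2)"
    proof -
      have "(m*\<delta>\<^sup>2)\<^sup>2 \<le> m*\<delta>\<^sup>2 * 1" unfolding power2_eq_square[of "m*\<delta>\<^sup>2"] using True
        by (intro mult_left_mono) auto
      hence "(m*\<delta>\<^sup>2)\<^sup>2 \<le> m*\<delta>\<^sup>2" by simp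
      moreover have "0 \<le> m*\<delta>\<^sup>2" by simp
      ultimately show ?thesis by linarith
    qed
    finally have "(1 + \<delta>\<^sup>2) ^ m - 1 \<le> (2 * sqrt m * \<delta>)\<^sup>2" using d by (simp add: power_mult_distrib)
    hence "sqrt ((1 + \<delta>\<^sup>2) ^ m - 1) \<le> sqrt ((2 * sqrt m * \<delta>)\<^sup>2)" by (rule real_sqrt_le_mono)
    also have "\<dots> = 2 * sqrt m * \<delta>" using d by simp
    finally show ?thesis using chi by linarith
  next
    case False
    hence "1 < sqrt (m * \<delta>\<^sup>2)" by simp
    hence "1 < sqrt m * \<delta>" using d by (simp add: real_sqrt_mult)
    thus ?thesis using le2 by linarith
  qed
qed


lemma pw0: "pw h 0 v j = pw h 0 u j" by (simp add: pw_def)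

lemma priv_lb:
  fixes m :: nat
  assumes k: "2 \<le> k" and A: "valid_alg k m A" and P: "diff_private k m \<epsilon> 0 A"
    and a: "0 < \<alpha>" "\<alpha> \<le> 1/128" and e: "0 < \<epsilon>" "\<epsilon> \<le> 1"
    and L: "(SUP p\<in>dists k. loss k A s m p) \<le> ennreal \<alpha>"
  shows "real (k div 2) \<le> 2560 * sqrt (real m) * \<alpha> * \<epsilon> * real s"
proof -
  define h where "h = k div 2"
  define \<delta> where "\<delta> = 64*\<alpha>"
  define r where "r = h div 16"
  define T where "T = 2 * sqrt (real m) * \<delta>"
  define K where "K = (1 + (exp \<epsilon> - 1) * T) ^ s"
  define Bnd where "Bnd = (16::real)^r * (17/16)^h"
  have h: "1 \<le> h" "2*h \<le> k" using k unfolding h_def by auto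
  have d: "0 \<le> \<delta>" "\<delta> \<le> 1/2" "\<bar>\<delta>\<bar> \<le> 1" using a unfolding \<delta>_def by auto
  have T0: "0 \<le> T" unfolding T_def using d by simp
  have e1: "0 \<le> exp \<epsilon> - 1" using e by simp
  define ew where "ew v D = (\<Prod>z\<in>{..<s}\<times>{..<m}. pw h \<delta> v (D z))" for v D
  define w0 where "w0 D = (\<Prod>z\<in>{..<s}\<times>{..<m}. pw h 0 (\<lambda>_. True) (D z))" for D
  define f where "f v D = measure (A s D) (Fset k h v)" for v D
  have AD: "prob_space (A s D)" "sets (A s D) = sets (out_space k)" if "D \<in> datasets k s m" for D
    using A that unfolding valid_alg_def by auto
  have f01: "0 \<le> f v D" "f v D \<le> 1" if "D \<in> datasets k s m" for v D
    unfolding f_def using AD[OF that] by (auto simp: prob_space.prob_le_1)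
  have ew1: "(\<Sum>D\<in>datasets k s m. ew v D) = 1" for v
    unfolding ew_def datasets_def using sum_prod_PiE_pow[of "{..<s}\<times>{..<m}" "{..<k}" "pw h \<delta> v"] pw_sum_k[OF h] by simp
  have w01: "(\<Sum>D\<in>datasets k s m. w0 D) = 1"
    unfolding w0_def datasets_def using sum_prod_PiE_pow[of "{..<s}\<times>{..<m}" "{..<k}" "pw h 0 (\<lambda>_. True)"] pw_sum_k[OF h] by simp
  have w00: "0 \<le> w0 D" for D unfolding w0_def by (auto intro!: prod_nonneg pw_nonneg)
  have key: "3/4 \<le> (\<Sum>D\<in>datasets k s m. ew v D * f v D)" for v
  proof -
    have hd: "hyp h \<delta> v \<in> dists k" using hyp_dists[OF h(1) d(3) h(2)] .
    have Lv: "loss k A s m (hyp h \<delta> v) \<le> ennreal \<alpha>"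
      using L hd by (meson SUP_upper order_trans)
    have "(\<Sum>D\<in>datasets k s m. (\<delta>/16 * (1 - f v D)) * (\<Prod>z\<in>{..<s}\<times>{..<m}. pmf (hyp h \<delta> v) (D z))) \<le> \<alpha>"
    proof (rule loss_lower[OF A _ _ _ Lv])
      show "set_pmf (hyp h \<delta> v) \<subseteq> {..<k}" using hd unfolding dists_def by simp
      show "0 \<le> \<delta>/16 * (1 - f v D)" if "D \<in> datasets k s m" for D
        using f01[OF that] d by (intro mult_nonneg_nonneg) auto
      show "ennreal (\<delta>/16 * (1 - f v D)) \<le> (\<integral>\<^sup>+q. ennreal (lossf k (hyp h \<delta> v) q) \<partial>A s D)"
        if "D \<in> datasets k s m" for D
        unfolding f_def using inner_priv[OF AD[OF that] h d(1)] d by simp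
    qed (use a in simp)
    hence "(\<Sum>D\<in>datasets k s m. (\<delta>/16 * (1 - f v D)) * ew v D) \<le> \<alpha>"
      unfolding ew_def using pmf_hyp[OF h(1) d(3)] by simp
    moreover have "(\<Sum>D\<in>datasets k s m. (\<delta>/16 * (1 - f v D)) * ew v D) = \<delta>/16 * (1 - (\<Sum>D\<in>datasets k s m. ew v D * f v D))"
    proof -
      have "(\<Sum>D\<in>datasets k s m. (\<delta>/16 * (1 - f v D)) * ew v D) = (\<Sum>D\<in>datasets k s m. \<delta>/16 * ew v D - \<delta>/16 * (ew v D * f v D))"
        by (intro sum.cong refl) (simp add: field_simps)
      also have "\<dots> = \<delta>/16 * (\<Sum>D\<in>datasets k s m. ew v D) - \<delta>/16 * (\<Sum>D\<in>datasets k s m. ew v D * f v D)"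
        by (simp add: sum_subtractf sum_distrib_left)
      finally show ?thesis by (simp only: ew1 right_diff_distrib mult_1_right)
    qed
    ultimately have "4*\<alpha> * (1 - (\<Sum>D\<in>datasets k s m. ew v D * f v D)) \<le> \<alpha>" unfolding \<delta>_def by simp
    thus ?thesis using a by (simp add: algebra_simps)
  qed
  have hyb: "(\<Sum>D\<in>datasets k s m. ew v D * f v D) \<le> K * (\<Sum>D\<in>datasets k s m. w0 D * f v D)" for v
  proof -
    have "(\<Sum>D\<in>PiE ({..<s}\<times>{..<m}) (\<lambda>_. {..<k}). (\<Prod>z\<in>{..<s}\<times>{..<m}. if fst z \<in> {..<s} then pw h \<delta> v (D z) else pw h 0 v (D z)) * f v D)
     \<le> (1 + (exp \<epsilon> - 1)*T)^card {..<s} * (\<Sum>D\<in>PiE ({..<s}\<times>{..<m}) (\<lambda>_. {..<k}). (\<Prod>z\<in>{..<s}\<times>{..<m}. pw h 0 v (D z)) * f v D)"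
    proof (rule hybrid)
      show "0 \<le> pw h \<delta> v y" "0 \<le> pw h 0 v y" for y using d by (auto intro!: pw_nonneg)
      show "sum (pw h \<delta> v) {..<k} = 1" "sum (pw h 0 v) {..<k} = 1" using pw_sum_k h by auto
      show "0 \<le> f v D" if "D \<in> PiE ({..<s}\<times>{..<m}) (\<lambda>_. {..<k})" for D
        using f01 that unfolding datasets_def by auto
      show "f v D \<le> exp \<epsilon> * f v D'"
        if "D \<in> PiE ({..<s}\<times>{..<m}) (\<lambda>_. {..<k})" "D' \<in> PiE ({..<s}\<times>{..<m}) (\<lambda>_. {..<k})" "u < s"
           "\<forall>i j. i \<noteq> u \<longrightarrow> D (i,j) = D' (i,j)" for D D' u
      proof -
        have "adjacent s D D'" unfolding adjacent_def using that(3,4) by blast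
        thus ?thesis using P that(1,2) Fset_sets[OF h(2), of v]
          unfolding diff_private_def datasets_def f_def by auto
      qed
      show "(\<Sum>x\<in>PiE ({u}\<times>{..<m}) (\<lambda>_. {..<k}). \<bar>(\<Prod>z\<in>{u}\<times>{..<m}. pw h \<delta> v (x z)) - (\<Prod>z\<in>{u}\<times>{..<m}. pw h 0 v (x z))\<bar>) \<le> T"
        for u :: nat unfolding T_def by (rule user_tv[OF h d(1,2)])
    qed (use e k in \<open>auto simp: lessThan_empty_iff\<close>)
    moreover have "(\<Sum>D\<in>PiE ({..<s}\<times>{..<m}) (\<lambda>_. {..<k}). (\<Prod>z\<in>{..<s}\<times>{..<m}. if fst z \<in> {..<s} then pw h \<delta> v (D z) else pw h 0 v (D z)) * f v D)
       = (\<Sum>D\<in>datasets k s m. ew v D * f v D)"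
      unfolding datasets_def ew_def by (intro sum.cong refl arg_cong2[where f="(*)"] prod.cong) auto
    moreover have "(\<Sum>D\<in>PiE ({..<s}\<times>{..<m}) (\<lambda>_. {..<k}). (\<Prod>z\<in>{..<s}\<times>{..<m}. pw h 0 v (D z)) * f v D)
       = (\<Sum>D\<in>datasets k s m. w0 D * f v D)"
      unfolding datasets_def w0_def using pw0[of h v _ "\<lambda>_. True"] by simp
    ultimately show ?thesis unfolding K_def by simp
  qed
  have K0: "0 \<le> K" unfolding K_def using e1 T0 by simp
  have "3/4 * real (card (cube h)) = (\<Sum>v\<in>cube h. 3/4)" by simp
  also have "\<dots> \<le> (\<Sum>v\<in>cube h. \<Sum>D\<in>datasets k s m. ew v D * f v D)" by (intro sum_mono key)
  also have "\<dots> \<le> (\<Sum>v\<in>cube h. K * (\<Sum>D\<in>datasets k s m. w0 D * f v D))" by (intro sum_mono hyb)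
  also have "\<dots> = K * (\<Sum>D\<in>datasets k s m. w0 D * (\<Sum>v\<in>cube h. f v D))"
    by (simp add: sum_distrib_left sum.swap[of _ "cube h"])
  also have "\<dots> \<le> K * (\<Sum>D\<in>datasets k s m. w0 D * Bnd)"
  proof (rule mult_left_mono[OF sum_mono K0])
    fix D assume D: "D \<in> datasets k s m"
    have "(\<Sum>v\<in>cube h. f v D) \<le> Bnd" unfolding f_def Bnd_def r_def by (rule sum_Fset_measure[OF AD[OF D] h(2)])
    thus "w0 D * (\<Sum>v\<in>cube h. f v D) \<le> w0 D * Bnd" by (intro mult_left_mono w00)
  qed
  also have "\<dots> = K * Bnd" using w01 by (simp add: sum_distrib_right[symmetric])
  finally have main: "3/4 * 2^h \<le> K * Bnd" by (simp add: card_cube)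
  define X where "X = real s * (2*\<epsilon>*T)"
  have KX: "K \<le> exp X"
  proof -
    have "exp \<epsilon> \<le> 1 + \<epsilon> + \<epsilon>\<^sup>2" using e by (intro exp_bound) auto
    moreover have "\<epsilon>\<^sup>2 \<le> \<epsilon>" using e by (simp add: power2_eq_square mult_left_le_one_le)
    ultimately have "exp \<epsilon> - 1 \<le> 2*\<epsilon>" by simp
    hence "(exp \<epsilon> - 1) * T \<le> 2*\<epsilon>*T" using T0 by (intro mult_right_mono)
    have "K \<le> exp ((exp \<epsilon> - 1) * T) ^ s" unfolding K_def using e1 T0 by (intro power_mono) auto
    also have "\<dots> = exp (real s * ((exp \<epsilon> - 1) * T))" by (rule exp_of_nat_mult[symmetric])
    also have "\<dots> \<le> exp X" unfolding X_def using \<open>(exp \<epsilon> - 1) * T \<le> 2*\<epsilon>*T\<close> by (simp add: mult_left_mono)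
    finally show ?thesis .
  qed
  have Bpos: "0 < Bnd" unfolding Bnd_def by simp
  have "3/4 * 2^h \<le> exp X * Bnd" using main KX Bpos by (meson mult_right_mono less_imp_le order_trans)
  hence "ln (3/4 * 2^h) \<le> ln (exp X * Bnd)" using Bpos by (subst ln_le_cancel_iff) auto
  moreover have "ln (3/4 * 2^h) = ln (3/4) + h * ln (2::real)"
    by (subst ln_mult) (auto simp: ln_realpow)
  moreover have "ln (exp X * Bnd) = X + (r * ln 16 + h * ln (17/16))"
  proof -
    have "ln (exp X * Bnd) = X + ln Bnd" using Bpos by (simp add: ln_mult)
    moreover have "ln Bnd = r * ln 16 + h * ln (17/16)" unfolding Bnd_def by (simp add: ln_mult ln_realpow)
    ultimately show ?thesis by simp
  qed
  ultimately have lnineq: "ln (3/4) + h * ln 2 \<le> X + (r * ln 16 + h * ln (17/16))" by simp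
  have l1: "ln (4/3::real) \<le> 1/3" using ln_le_minus_one[of "4/3::real"] by simp
  have l1': "ln (3/4::real) = - ln (4/3)" by (simp add: ln_div)
  have l2: "ln (17/16::real) \<le> 1/16" using ln_le_minus_one[of "17/16::real"] by simp
  have l3: "ln (16::real) = 4 * ln 2" using ln_realpow[of 2 4] by simp
  have l4: "2/3 \<le> ln (2::real)" by (rule ln2_ge_two_thirds)
  have rh: "real r \<le> real h / 16" unfolding r_def by linarith
  have "real r * ln 16 \<le> real h / 16 * (4 * ln 2)" unfolding l3 using rh l4 by (intro mult_right_mono) auto
  moreover have "h * ln (17/16::real) \<le> h * (1/16)" using l2 by (intro mult_left_mono) auto
  ultimately have "- (1/3) + h * ln 2 \<le> X + (h/16 * (4 * ln 2) + h/16)" using lnineq l1 l1' by linarith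
  hence "h * (3/4 * ln 2) - h/16 - 1/3 \<le> X" by (simp add: algebra_simps)
  moreover have "h * (1/2) \<le> h * (3/4 * ln 2)" using l4 by (intro mult_left_mono) auto
  ultimately have "real h / 10 \<le> X" using h by linarith
  thus ?thesis unfolding X_def T_def \<delta>_def h_def by (simp add: algebra_simps)
qed


lemma final_arith:
  fixes k h m s \<alpha> \<epsilon> :: real
  assumes h3: "k \<le> 3*h" and m: "0 < m" and a: "0 < \<alpha>" and e: "0 < \<epsilon>" and hp: "0 \<le> h"
    and s1: "h / (1920*\<alpha>\<^sup>2) < s*m" and s2: "h \<le> 2560 * sqrt m * \<alpha> * \<epsilon> * s"
  shows "1/15360 * (k/(m*\<alpha>\<^sup>2) + k/(sqrt m*\<alpha>*\<epsilon>)) \<le> s"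
proof -
  have a2: "0 < \<alpha>\<^sup>2" using a by simp
  have sm: "0 < sqrt m" using m by simp
  have "h < s*m*(1920*\<alpha>\<^sup>2)" using s1 a2 by (simp add: divide_less_eq)
  hence "k < 5760 * s * (m*\<alpha>\<^sup>2)" using h3 by (simp add: algebra_simps)
  hence t1: "k/(m*\<alpha>\<^sup>2) \<le> 5760 * s" using m a2 by (simp add: divide_le_eq)
  have "k \<le> 7680 * s * (sqrt m*\<alpha>*\<epsilon>)" using s2 h3 by (simp add: algebra_simps)
  hence t2: "k/(sqrt m*\<alpha>*\<epsilon>) \<le> 7680 * s" using sm a e by (simp add: divide_le_eq)
  have "0 \<le> s"
  proof -
    have "0 < s*m" using s1 hp a2 by (smt (verit) divide_nonneg_pos)
    thus ?thesis using m by (simp add: zero_less_mult_iff)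
  qed
  thus ?thesis using t1 t2 by simp
qed

lemma main_bound:
  fixes k m :: nat and \<alpha> \<epsilon> :: real
  assumes k: "2 \<le> k" and m: "1 \<le> m" and a: "0 < \<alpha>" "\<alpha> \<le> 1/128" and e: "0 < \<epsilon>" "\<epsilon> \<le> 1"
  shows "ennreal (1/15360 * (real k / (real m * \<alpha>\<^sup>2) + real k / (sqrt (real m) * \<alpha> * \<epsilon>)))
      \<le> ennreal_of_enat (opt_user_complexity k m \<alpha> \<epsilon> 0)"
proof -
  define B where "B = 1/15360 * (real k / (real m * \<alpha>\<^sup>2) + real k / (sqrt (real m) * \<alpha> * \<epsilon>))"
  define N where "N = nat \<lceil>B\<rceil>"
  have sB: "B \<le> real s" if A: "valid_alg k m A" "diff_private k m \<epsilon> 0 A"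
    and L: "(SUP p\<in>dists k. loss k A s m p) \<le> ennreal \<alpha>" for A s
  proof -
    have s1: "real (k div 2) / (1920 * \<alpha>\<^sup>2) < real (s*m)" using stat_lb[OF k A(1) a(1) _ L] a by simp
    have s2: "real (k div 2) \<le> 2560 * sqrt (real m) * \<alpha> * \<epsilon> * real s" using priv_lb[OF k A a e L] .
    have "k \<le> 3 * (k div 2)" using k by presburger
    hence h3: "real k \<le> 3 * real (k div 2)" by (metis of_nat_le_iff of_nat_mult of_nat_numeral)
    show ?thesis unfolding B_def
      by (rule final_arith[OF h3 _ a(1) e(1) _ _ s2]) (use m s1 in auto)
  qed
  have "enat N \<le> opt_user_complexity k m \<alpha> \<epsilon> 0"
    unfolding opt_user_complexity_def user_complexity_def
  proof (rule INF_greatest, rule Inf_greatest, elim imageE)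
    fix A x s assume A: "A \<in> {A. valid_alg k m A \<and> diff_private k m \<epsilon> 0 A}"
      and x: "x = enat s" and s: "s \<in> {s. (SUP p\<in>dists k. loss k A s m p) \<le> ennreal \<alpha>}"
    have "B \<le> real s" using sB[of A s] A s by auto
    hence "N \<le> s" unfolding N_def by linarith
    thus "enat N \<le> x" using x by simp
  qed
  hence "ennreal_of_enat (enat N) \<le> ennreal_of_enat (opt_user_complexity k m \<alpha> \<epsilon> 0)"
    by (rule ennreal_of_enat_le_iff[THEN iffD2])
  moreover have "ennreal B \<le> ennreal_of_enat (enat N)"
  proof -
    have "B \<le> real N" unfolding N_def by linarith
    hence "ennreal B \<le> ennreal (real N)" by (rule ennreal_leI)
    thus ?thesis by (simp add: ennreal_of_nat_eq_real_of_nat)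
  qed
  ultimately show ?thesis unfolding B_def by (rule order_trans[rotated])
qed

theorem theorem3:
  shows "\<exists>C>0. \<exists>\<alpha>\<^sub>0>0. \<forall>(k::nat) (m::nat) (\<alpha>::real) (\<epsilon>::real).
    2 \<le> k \<longrightarrow> 1 \<le> m \<longrightarrow> 0 < \<alpha> \<longrightarrow> \<alpha> \<le> \<alpha>\<^sub>0 \<longrightarrow> 0 < \<epsilon> \<longrightarrow> \<epsilon> \<le> 1 \<longrightarrow>
    ennreal (C * (real k / (real m * \<alpha>\<^sup>2) + real k / (sqrt (real m) * \<alpha> * \<epsilon>)))
      \<le> ennreal_of_enat (opt_user_complexity k m \<alpha> \<epsilon> 0)"
proof -
  have "\<forall>(k::nat) (m::nat) (\<alpha>::real) (\<epsilon>::real).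
    2 \<le> k \<longrightarrow> 1 \<le> m \<longrightarrow> 0 < \<alpha> \<longrightarrow> \<alpha> \<le> 1/128 \<longrightarrow> 0 < \<epsilon> \<longrightarrow> \<epsilon> \<le> 1 \<longrightarrow>
    ennreal (1/15360 * (real k / (real m * \<alpha>\<^sup>2) + real k / (sqrt (real m) * \<alpha> * \<epsilon>)))
      \<le> ennreal_of_enat (opt_user_complexity k m \<alpha> \<epsilon> 0)"
    using main_bound by blast
  moreover have "(0::real) < 1/15360" "(0::real) < 1/128" by simp_all
  ultimately show ?thesis by blast
qed

end
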